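(* Let $L_0\in\mathbb{R}^{n\times n}$ have reduced SVD $L_0=U\Sigma V^*$, let $S_0\in\mathbb{R}^{n\times n}$ with support $\Omega$, and let $0<\lambda<1$. Assume $\|\mathcal{P}_\Omega\mathcal{P}_T\|\le 1/2$. Then $(L_0,S_0)$ is the unique solution of \[ \text{minimize } \|L\|_*+\lambda\|S\|_1\quad\text{subject to}\quad L+S=L_0+S_0 \] if there is a triple $(W,F,D)$ of $n\times n$ matrices obeying \[ UV^*+W=\lambda(\mathrm{sgn}(S_0)+F+\mathcal{P}_\Omega D) \] with $\mathcal{P}_TW=0$, $\|W\|\le\frac12$, $\mathcal{P}_\Omega F=0$, $\|F\|_\infty\le\frac12$, and $\|\mathcal{P}_\Omega D\|_F\le\frac14$.
   Context: $U,V\in\mathbb{R}^{n\times r}$ have orthonormal columns. $T=\{UX^*+YV^*: X,Y\in\mathbb{R}^{n\times r}\}$ and $\mathcal{P}_T$ is the orthogonal projection onto $T$ with respect to the trace inner product. $\mathcal{P}_\Omega X$ keeps the entries of $X$ in $\Omega$ and zeroes the others. For linear maps on matrices, $\|\cdot\|$ is the operator norm with respect to the Frobenius norm; for matrices, $\|W\|$ is the spectral norm, $\|\cdot\|_F$ the Frobenius norm, $\|F\|_\infty=\max_{ij}|F_{ij}|$, $\|\cdot\|_*$ the nuclear norm and $\|S\|_1=\sum_{ij}|S_{ij}|$. $\mathrm{sgn}$ is the entrywise sign with $\mathrm{sgn}(0)=0$. *)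

theory Defs
  imports "Jordan_Normal_Form.Matrix" "Jordan_Normal_Form.Char_Poly"
    "HOL-Computational_Algebra.Polynomial"
begin

definition tr_inner :: "real mat \<Rightarrow> real mat \<Rightarrow> real" where
  "tr_inner A B = (\<Sum>i<dim_row A. \<Sum>j<dim_col A. A $$ (i,j) * B $$ (i,j))"

definition singular_values :: "real mat \<Rightarrow> real multiset" where
  "singular_values A = image_mset sqrt (proots (char_poly (transpose_mat A * A)))"

definition nuclear_norm :: "real mat \<Rightarrow> real" where
  "nuclear_norm A = sum_mset (singular_values A)"

definition spectral_norm :: "real mat \<Rightarrow> real" where
  "spectral_norm A = Max (insert 0 (set_mset (singular_values A)))"

definition frob_norm :: "real mat \<Rightarrow> real" where
  "frob_norm A = sqrt (\<Sum>i<dim_row A. \<Sum>j<dim_col A. (A $$ (i,j))^2)"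

definition max_norm :: "real mat \<Rightarrow> real" where
  "max_norm A = Max (insert 0 {\<bar>A $$ (i,j)\<bar> | i j. i < dim_row A \<and> j < dim_col A})"

definition l1_norm :: "real mat \<Rightarrow> real" where
  "l1_norm A = (\<Sum>i<dim_row A. \<Sum>j<dim_col A. \<bar>A $$ (i,j)\<bar>)"

definition sgn_mat :: "real mat \<Rightarrow> real mat" where
  "sgn_mat A = map_mat sgn A"

definition support :: "real mat \<Rightarrow> (nat \<times> nat) set" where
  "support A = {(i,j). i < dim_row A \<and> j < dim_col A \<and> A $$ (i,j) \<noteq> 0}"

definition P_Omega :: "(nat \<times> nat) set \<Rightarrow> real mat \<Rightarrow> real mat" where
  "P_Omega \<Omega> X = mat (dim_row X) (dim_col X) (\<lambda>(i,j). if (i,j) \<in> \<Omega> then X $$ (i,j) else 0)"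

definition tangent_space :: "nat \<Rightarrow> real mat \<Rightarrow> real mat \<Rightarrow> real mat set" where
  "tangent_space n U V = {U * transpose_mat X + Y * transpose_mat V | X Y.
      X \<in> carrier_mat n (dim_col U) \<and> Y \<in> carrier_mat n (dim_col V)}"

definition orth_proj :: "real mat set \<Rightarrow> real mat \<Rightarrow> real mat" where
  "orth_proj S M = (THE P. P \<in> S \<and> (\<forall>Y\<in>S. tr_inner (M - P) Y = 0))"

definition op_norm :: "nat \<Rightarrow> (real mat \<Rightarrow> real mat) \<Rightarrow> real" where
  "op_norm n f = Sup {frob_norm (f X) | X. X \<in> carrier_mat n n \<and> frob_norm X \<le> 1}"

definition is_opt :: "nat \<Rightarrow> real \<Rightarrow> real mat \<Rightarrow> real mat \<Rightarrow> real mat \<Rightarrow> bool" where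
  "is_opt n lam M L S \<longleftrightarrow> L \<in> carrier_mat n n \<and> S \<in> carrier_mat n n \<and> L + S = M \<and>
     (\<forall>L' S'. L' \<in> carrier_mat n n \<and> S' \<in> carrier_mat n n \<and> L' + S' = M \<longrightarrow>
        nuclear_norm L + lam * l1_norm S \<le> nuclear_norm L' + lam * l1_norm S')"

end

theory Submission
  imports Defs "Jordan_Normal_Form.Schur_Decomposition" "HOL-Analysis.L2_Norm"
begin

declare col_mult[simp del]


lemma sym_real_eigvec:
  fixes S :: "real mat"
  assumes S: "S \<in> carrier_mat n n" and sym: "transpose_mat S = S" and n: "n > 0"
  shows "\<exists>\<mu> v. v \<in> carrier_vec n \<and> v \<noteq> 0\<^sub>v n \<and> S *\<^sub>v v = \<mu> \<cdot>\<^sub>v v"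
proof -
  define Sc where "Sc = map_mat complex_of_real S"
  have Sc: "Sc \<in> carrier_mat n n" using S unfolding Sc_def by auto
  obtain as where cp: "char_poly Sc = (\<Prod>a\<leftarrow>as. [:- a, 1:])" and len: "length as = n"
    using char_poly_factorized[OF Sc] by blast
  obtain l rest where asl: "as = l # rest" using len n by (cases as) auto
  have "poly (char_poly Sc) l = 0" unfolding cp asl by simp
  hence "eigenvalue Sc l" using eigenvalue_root_char_poly[OF Sc] by simp
  then obtain z where z: "z \<in> carrier_vec n" "z \<noteq> 0\<^sub>v n" "Sc *\<^sub>v z = l \<cdot>\<^sub>v z"
    unfolding eigenvalue_def eigenvector_def using Sc by auto
  have Sij: "\<And>i j. i < n \<Longrightarrow> j < n \<Longrightarrow> S $$ (j,i) = S $$ (i,j)"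
    using sym S by (metis carrier_matD index_transpose_mat(1))
  have comp: "(\<Sum>j<n. complex_of_real (S $$ (i,j)) * z $ j) = l * z $ i" if i: "i < n" for i
  proof -
    have "(Sc *\<^sub>v z) $ i = l * z $ i" using z(3) i z(1) by auto
    moreover have "(Sc *\<^sub>v z) $ i = (\<Sum>j<n. complex_of_real (S $$ (i,j)) * z $ j)"
      using i Sc S z(1) unfolding Sc_def
      by (auto simp: scalar_prod_def lessThan_atLeast0 intro!: sum.cong)
    ultimately show ?thesis by simp
  qed
  define Q where "Q = (\<Sum>i<n. cnj (z $ i) * (\<Sum>j<n. complex_of_real (S $$ (i,j)) * z $ j))"
  define N where "N = (\<Sum>i<n. cmod (z $ i) ^ 2)"
  have QN: "Q = l * complex_of_real N"
  proof -
    have "Q = (\<Sum>i<n. l * (cnj (z $ i) * z $ i))" unfolding Q_def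
      by (rule sum.cong, auto simp: comp)
    also have "\<dots> = l * (\<Sum>i<n. complex_of_real (cmod (z $ i) ^ 2))"
      by (simp add: sum_distrib_left, intro sum.cong refl, simp add: mult.commute flip: complex_norm_square of_real_power)
    finally show ?thesis unfolding N_def by simp
  qed
  have "cnj Q = Q"
  proof -
    have "cnj Q = (\<Sum>i<n. \<Sum>j<n. z $ i * (complex_of_real (S $$ (i,j)) * cnj (z $ j)))"
      unfolding Q_def by (simp add: sum_distrib_left)
    also have "\<dots> = (\<Sum>j<n. \<Sum>i<n. z $ i * (complex_of_real (S $$ (i,j)) * cnj (z $ j)))"
      by (rule sum.swap)
    also have "\<dots> = Q" unfolding Q_def sum_distrib_left
      by (intro sum.cong refl, auto simp: Sij mult.commute mult.left_commute)
    finally show ?thesis .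
  qed
  hence ImQ: "Im Q = 0" by (metis Reals_cnj_iff complex_is_Real_iff)
  obtain k where k: "k < n" "z $ k \<noteq> 0" using z(1,2) by (metis carrier_vecD eq_vecI index_zero_vec(1,2))
  have "N > 0" unfolding N_def
  proof (rule sum_pos2[of _ k])
    show "cmod (z $ k)^2 > 0" using k by simp
  qed (use k in auto)
  with ImQ QN have Iml: "Im l = 0" by simp
  have compR: "S *\<^sub>v vec n (\<lambda>i. f (z $ i)) = Re l \<cdot>\<^sub>v vec n (\<lambda>i. f (z $ i))"
    if f: "f = Re \<or> f = Im" for f
  proof (rule eq_vecI)
    fix i assume "i < dim_vec (Re l \<cdot>\<^sub>v vec n (\<lambda>i. f (z $ i)))"
    hence i: "i < n" by simp
    have "(S *\<^sub>v vec n (\<lambda>i. f (z $ i))) $ i = (\<Sum>j<n. S $$ (i,j) * f (z $ j))"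
      using i S by (auto simp: scalar_prod_def lessThan_atLeast0 intro!: sum.cong)
    also have "\<dots> = f (\<Sum>j<n. complex_of_real (S $$ (i,j)) * z $ j)"
      using f by (auto simp: Re_sum Im_sum)
    also have "\<dots> = f (l * z $ i)" using comp[OF i] by simp
    also have "\<dots> = Re l * f (z $ i)" using f Iml by auto
    finally show "(S *\<^sub>v vec n (\<lambda>i. f (z $ i))) $ i = (Re l \<cdot>\<^sub>v vec n (\<lambda>i. f (z $ i))) $ i"
      using i by simp
  qed (use S in auto)
  show ?thesis
  proof (cases "Re (z $ k) = 0")
    case True
    hence "Im (z $ k) \<noteq> 0" using k complex_eqI by force
    hence "vec n (\<lambda>i. Im (z $ i)) \<noteq> 0\<^sub>v n" using k
      by (metis index_vec index_zero_vec(1))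
    thus ?thesis using compR[of Im] by (intro exI[of _ "Re l"] exI[of _ "vec n (\<lambda>i. Im (z $ i))"]) auto
  next
    case False
    hence "vec n (\<lambda>i. Re (z $ i)) \<noteq> 0\<^sub>v n" using k
      by (metis index_vec index_zero_vec(1))
    thus ?thesis using compR[of Re] by (intro exI[of _ "Re l"] exI[of _ "vec n (\<lambda>i. Re (z $ i))"]) auto
  qed
qed


lemma conj_real_vec[simp]: "conjugate (v :: real vec) = v"
  by (rule eq_vecI) auto

lemma real_sprodc[simp]: "(v :: real vec) \<bullet>c w = v \<bullet> w"
  by simp

lemma real_self_sprod_nonneg: "(v :: real vec) \<bullet> v \<ge> 0"
  unfolding scalar_prod_def by (auto intro: sum_nonneg)

lemma orth_complete:
  fixes v :: "real vec"
  assumes v: "v \<in> carrier_vec n" and v1: "v \<bullet> v = 1"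
  shows "\<exists>W \<in> carrier_mat n n. transpose_mat W * W = 1\<^sub>m n \<and> col W 0 = v"
proof -
  have v0: "v \<noteq> 0\<^sub>v n" using v1 v by auto
  have n: "n > 0"
  proof (rule ccontr)
    assume "\<not> n > 0" hence "n = 0" by simp
    hence "v \<bullet> v = 0" using v unfolding scalar_prod_def by simp
    thus False using v1 by simp
  qed
  interpret cof_vec_space n "TYPE(real)" .
  define b where "b = basis_completion v"
  define ws where "ws = gram_schmidt n b"
  from basis_completion[OF v v0, folded b_def]
  have dist_b: "distinct b" and indep: "\<not> lin_dep (set b)" and bc: "set b \<subseteq> carrier_vec n"
    and hdb: "hd b = v" and len_b: "length b = n" by auto
  from hdb len_b n obtain vs where bv: "b = v # vs" by (cases b, auto)
  from gram_schmidt_result[OF bc dist_b indep refl, folded ws_def]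
  have ws: "set ws \<subseteq> carrier_vec n" "corthogonal ws" "length ws = n"
    by (auto simp: len_b)
  from gram_schmidt_hd[OF v, of vs, folded bv] have hdws: "hd ws = v" unfolding ws_def .
  have ws0: "ws ! 0 = v" using hdws ws(3) n by (metis hd_conv_nth list.size(3) less_not_refl)
  have wsi: "ws ! i \<in> carrier_vec n" if "i < n" for i using ws that by auto
  have orth: "ws ! i \<bullet> ws ! j = 0 \<longleftrightarrow> i \<noteq> j" if "i < n" "j < n" for i j
    using ws(2) that ws(3) unfolding corthogonal_def by auto
  have pos: "ws ! i \<bullet> ws ! i > 0" if "i < n" for i
    using orth[OF that that] real_self_sprod_nonneg[of "ws ! i"] by linarith
  define us where "us = map (\<lambda>w. (1 / sqrt (w \<bullet> w)) \<cdot>\<^sub>v w) ws"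
  have usi: "us ! i = (1 / sqrt (ws ! i \<bullet> ws ! i)) \<cdot>\<^sub>v ws ! i" if "i < n" for i
    unfolding us_def using that ws(3) by auto
  have usc: "set us \<subseteq> carrier_vec n" unfolding us_def using ws(1) by auto
  have lus: "length us = n" unfolding us_def using ws(3) by simp
  define W where "W = mat_of_cols n us"
  have W: "W \<in> carrier_mat n n" unfolding W_def using lus by auto
  have colW: "col W i = us ! i" if "i < n" for i
    unfolding W_def using that lus usc by (metis col_mat_of_cols nth_mem subsetD)
  have "transpose_mat W * W = 1\<^sub>m n"
  proof (rule eq_matI)
    fix i j assume "i < dim_row (1\<^sub>m n)" "j < dim_col (1\<^sub>m n)"
    hence i: "i < n" and j: "j < n" by auto
    have "(transpose_mat W * W) $$ (i,j) = col W i \<bullet> col W j"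
      using W i j by (simp add: row_transpose)
    also have "\<dots> = us ! i \<bullet> us ! j" using colW i j by simp
    also have "\<dots> = (1 / sqrt (ws ! i \<bullet> ws ! i)) * (1 / sqrt (ws ! j \<bullet> ws ! j)) * (ws ! i \<bullet> ws ! j)"
      unfolding usi[OF i] usi[OF j] using wsi[OF i] wsi[OF j]
      by (simp add: smult_scalar_prod_distrib scalar_prod_smult_distrib)
    also have "\<dots> = 1\<^sub>m n $$ (i,j)"
    proof (cases "i = j")
      case True
      with pos[OF i] show ?thesis using i
        by (simp add: field_simps)
    next
      case False
      thus ?thesis using orth[OF i j] i j by simp
    qed
    finally show "(transpose_mat W * W) $$ (i,j) = 1\<^sub>m n $$ (i,j)" .
  qed (use W in auto)
  moreover have "col W 0 = v" using colW[OF n] usi[OF n] ws0 v1 by simp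
  ultimately show ?thesis using W by blast
qed


lemma spectral:
  fixes S :: "real mat"
  assumes "S \<in> carrier_mat n n" "transpose_mat S = S"
  shows "\<exists>Q D. Q \<in> carrier_mat n n \<and> D \<in> carrier_mat n n \<and> diagonal_mat D \<and>
     transpose_mat Q * Q = 1\<^sub>m n \<and> S = Q * D * transpose_mat Q"
  using assms
proof (induction n arbitrary: S)
  case 0
  show ?case
    by (rule exI[of _ "1\<^sub>m 0"], rule exI[of _ "0\<^sub>m 0 0"], insert 0(1),
        auto simp: diagonal_mat_def intro!: eq_matI)
next
  case (Suc m S)
  let ?n = "Suc m"
  have S: "S \<in> carrier_mat ?n ?n" and symS: "transpose_mat S = S" using Suc.prems by auto
  obtain \<mu> v where v: "v \<in> carrier_vec ?n" "v \<noteq> 0\<^sub>v ?n" "S *\<^sub>v v = \<mu> \<cdot>\<^sub>v v"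
    using sym_real_eigvec[OF S symS] by auto
  have vv: "v \<bullet> v > 0"
  proof -
    have "v \<bullet> v \<noteq> 0"
    proof
      assume "v \<bullet> v = 0"
      hence "v \<bullet>c v = 0" by simp
      hence "v = 0\<^sub>v ?n" using conjugate_square_eq_0_vec[OF v(1)] by simp
      thus False using v(2) by simp
    qed
    thus ?thesis using real_self_sprod_nonneg[of v] by linarith
  qed
  define u where "u = (1 / sqrt (v \<bullet> v)) \<cdot>\<^sub>v v"
  have u: "u \<in> carrier_vec ?n" unfolding u_def using v by simp
  have u1: "u \<bullet> u = 1" unfolding u_def using v(1) vv
    by (simp add: smult_scalar_prod_distrib scalar_prod_smult_distrib field_simps)
  have Su: "S *\<^sub>v u = \<mu> \<cdot>\<^sub>v u" unfolding u_def using v S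
    by (simp add: mult_mat_vec smult_smult_assoc mult.commute)
  obtain W where W: "W \<in> carrier_mat ?n ?n" and WW: "transpose_mat W * W = 1\<^sub>m ?n"
    and W0: "col W 0 = u" using orth_complete[OF u u1] by blast
  have WW': "W * transpose_mat W = 1\<^sub>m ?n"
    using mat_mult_left_right_inverse[OF _ W WW] W by auto
  define M where "M = transpose_mat W * S * W"
  have M: "M \<in> carrier_mat ?n ?n" unfolding M_def using W S by auto
  have symM: "transpose_mat M = M" unfolding M_def using W S symS
    by (simp add: transpose_mult[of _ ?n ?n _ ?n] assoc_mult_mat[of _ ?n ?n _ ?n _ ?n])
  have Mi0: "M $$ (i, 0) = (if i = 0 then \<mu> else 0)" if i: "i < ?n" for i
  proof -
    have "M $$ (i,0) = (transpose_mat W * (S * W)) $$ (i,0)"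
      unfolding M_def using W S by (simp add: assoc_mult_mat[of _ ?n ?n _ ?n _ ?n])
    also have "\<dots> = col W i \<bullet> col (S * W) 0" using i W S by (simp add: row_transpose)
    also have "col (S * W) 0 = S *\<^sub>v col W 0" using W S by simp
    also have "\<dots> = \<mu> \<cdot>\<^sub>v col W 0" using W0 Su by simp
    also have "col W i \<bullet> (\<mu> \<cdot>\<^sub>v col W 0) = \<mu> * (col W i \<bullet> col W 0)"
      using W by (simp add: scalar_prod_smult_distrib)
    also have "col W i \<bullet> col W 0 = (transpose_mat W * W) $$ (i,0)" using i W by (simp add: row_transpose)
    also have "\<dots> = (if i = 0 then 1 else 0)" using WW i by simp
    finally show ?thesis by simp
  qed
  have Msym: "M $$ (i,j) = M $$ (j,i)" if "i < ?n" "j < ?n" for i j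
    using symM that M by (metis carrier_matD index_transpose_mat(1))
  obtain A1 A2 A0 A3 where sp: "split_block M 1 1 = (A1,A2,A0,A3)" by (cases "split_block M 1 1") auto
  have dims: "dim_row M = 1 + m" "dim_col M = 1 + m" using M by auto
  note spl = split_block[OF sp dims]
  have A1: "A1 = mat 1 1 (\<lambda>_. \<mu>)" using sp Mi0[of 0] unfolding split_block_def Let_def
    by (auto intro!: eq_matI)
  have M0j: "M $$ (0, Suc j) = 0" if "j < m" for j
    using Mi0[of "Suc j"] Msym[of 0 "Suc j"] that by simp
  have A2: "A2 = 0\<^sub>m 1 m" using sp M0j M unfolding split_block_def Let_def
    by (auto intro!: eq_matI)
  have A0: "A0 = 0\<^sub>m m 1" using sp Mi0 M unfolding split_block_def Let_def
    by (auto intro!: eq_matI)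
  have A3: "A3 \<in> carrier_mat m m" using spl by simp
  have symA3: "transpose_mat A3 = A3" using sp M unfolding split_block_def Let_def
    by (auto intro!: eq_matI Msym)
  obtain Q3 D3 where Q3: "Q3 \<in> carrier_mat m m" and D3: "D3 \<in> carrier_mat m m"
    and diag3: "diagonal_mat D3" and QQ3: "transpose_mat Q3 * Q3 = 1\<^sub>m m"
    and A3eq: "A3 = Q3 * D3 * transpose_mat Q3"
    using Suc.IH[OF A3 symA3] by blast
  define P where "P = four_block_mat (1\<^sub>m 1) (0\<^sub>m 1 m) (0\<^sub>m m 1) Q3"
  define D where "D = four_block_mat A1 (0\<^sub>m 1 m) (0\<^sub>m m 1) D3"
  have A1c: "A1 \<in> carrier_mat 1 1" unfolding A1 by simp
  have P: "P \<in> carrier_mat ?n ?n" unfolding P_def using Q3 by auto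
  have D: "D \<in> carrier_mat ?n ?n" unfolding D_def using D3 A1c by auto
  have PT: "transpose_mat P = four_block_mat (1\<^sub>m 1) (0\<^sub>m 1 m) (0\<^sub>m m 1) (transpose_mat Q3)"
    unfolding P_def using Q3 by (subst transpose_four_block_mat) auto
  have PTc: "transpose_mat P \<in> carrier_mat ?n ?n" using P by simp
  have PD: "P * D = four_block_mat A1 (0\<^sub>m 1 m) (0\<^sub>m m 1) (Q3 * D3)"
    unfolding P_def D_def
    by (subst mult_four_block_mat[OF one_carrier_mat zero_carrier_mat zero_carrier_mat Q3
          A1c zero_carrier_mat zero_carrier_mat D3]) (use Q3 D3 A1c in auto)
  have QT3: "transpose_mat Q3 \<in> carrier_mat m m" using Q3 by simp
  have "P * D * transpose_mat P = four_block_mat A1 (0\<^sub>m 1 m) (0\<^sub>m m 1) (Q3 * D3 * transpose_mat Q3)"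
    unfolding PD PT
    by (subst mult_four_block_mat[OF A1c zero_carrier_mat zero_carrier_mat mult_carrier_mat[OF Q3 D3]
          one_carrier_mat zero_carrier_mat zero_carrier_mat QT3]) (use Q3 D3 A1c in auto)
  also have "\<dots> = M" using spl(5) A2 A0 A3eq by simp
  finally have MPD: "M = P * D * transpose_mat P" by simp
  have "S = W * M * transpose_mat W"
  proof -
    have "W * M * transpose_mat W = (W * transpose_mat W) * S * (W * transpose_mat W)"
      unfolding M_def using W S
      by (simp add: assoc_mult_mat[of _ ?n ?n _ ?n _ ?n])
    thus ?thesis using WW' S by simp
  qed
  also have "\<dots> = (W * P) * D * transpose_mat (W * P)"
    unfolding MPD using W P D PTc
    by (simp add: transpose_mult[of _ ?n ?n _ ?n] assoc_mult_mat[of _ ?n ?n _ ?n _ ?n])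
  finally have Seq: "S = (W * P) * D * transpose_mat (W * P)" .
  have WWP: "transpose_mat W * (W * P) = P"
    by (subst assoc_mult_mat[symmetric, of _ ?n ?n _ ?n _ ?n]) (use W P WW in auto)
  have "transpose_mat (W * P) * (W * P) = transpose_mat P * P"
    using W P WWP by (simp add: transpose_mult[of _ ?n ?n _ ?n] assoc_mult_mat[of _ ?n ?n _ ?n _ ?n])
  also have "\<dots> = 1\<^sub>m ?n" unfolding PT unfolding P_def using Q3 QQ3
    by (subst mult_four_block_mat[OF one_carrier_mat zero_carrier_mat zero_carrier_mat QT3
          one_carrier_mat zero_carrier_mat zero_carrier_mat Q3])
       (use Q3 in \<open>auto simp: four_block_one_mat[of 1 m, simplified]\<close>)
  finally have QQ: "transpose_mat (W * P) * (W * P) = 1\<^sub>m ?n" .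
  have diagD: "diagonal_mat D" unfolding diagonal_mat_def
  proof (intro allI impI)
    fix i j assume i: "i < dim_row D" and j: "j < dim_col D" and ij: "i \<noteq> j"
    show "D $$ (i,j) = 0" using i j ij diag3 D3 A1c unfolding D_def diagonal_mat_def
      by (auto simp: index_mat_four_block)
  qed
  show ?case using W P D diagD QQ Seq by (intro exI[of _ "W * P"] exI[of _ D]) auto
qed


lemma tr_inner_alt: "X \<in> carrier_mat p q \<Longrightarrow>
  tr_inner X Y = (\<Sum>i<p. \<Sum>j<q. X $$ (i,j) * Y $$ (i,j))"
  unfolding tr_inner_def by simp

lemma tr_inner_cols:
  assumes X: "X \<in> carrier_mat p q" and Y: "Y \<in> carrier_mat p q"
  shows "tr_inner X Y = (\<Sum>j<q. col X j \<bullet> col Y j)"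
proof -
  have "tr_inner X Y = (\<Sum>j<q. \<Sum>i<p. X $$ (i,j) * Y $$ (i,j))"
    unfolding tr_inner_alt[OF X] by (rule sum.swap)
  also have "\<dots> = (\<Sum>j<q. col X j \<bullet> col Y j)"
    using X Y by (intro sum.cong refl) (auto simp: scalar_prod_def lessThan_atLeast0 intro!: sum.cong)
  finally show ?thesis .
qed

lemma tr_comm: "X \<in> carrier_mat p q \<Longrightarrow> Y \<in> carrier_mat p q \<Longrightarrow> tr_inner X Y = tr_inner Y X"
  unfolding tr_inner_def by (auto simp: mult.commute)

lemma tr_add_left: "X \<in> carrier_mat p q \<Longrightarrow> Y \<in> carrier_mat p q \<Longrightarrow> Z \<in> carrier_mat p q \<Longrightarrow>
  tr_inner (X + Y) Z = tr_inner X Z + tr_inner Y Z"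
  unfolding tr_inner_def by (auto simp: distrib_right sum.distrib)

lemma tr_add_right: "X \<in> carrier_mat p q \<Longrightarrow> Y \<in> carrier_mat p q \<Longrightarrow> Z \<in> carrier_mat p q \<Longrightarrow>
  tr_inner X (Y + Z) = tr_inner X Y + tr_inner X Z"
  unfolding tr_inner_def by (auto simp: distrib_left sum.distrib)

lemma tr_minus_left: "X \<in> carrier_mat p q \<Longrightarrow> Y \<in> carrier_mat p q \<Longrightarrow> Z \<in> carrier_mat p q \<Longrightarrow>
  tr_inner (X - Y) Z = tr_inner X Z - tr_inner Y Z"
  unfolding tr_inner_def by (auto simp: left_diff_distrib sum_subtractf)

lemma tr_minus_right: "X \<in> carrier_mat p q \<Longrightarrow> Y \<in> carrier_mat p q \<Longrightarrow> Z \<in> carrier_mat p q \<Longrightarrow>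
  tr_inner X (Y - Z) = tr_inner X Y - tr_inner X Z"
  unfolding tr_inner_def by (auto simp: right_diff_distrib sum_subtractf)

lemma tr_smult_left: "X \<in> carrier_mat p q \<Longrightarrow> tr_inner (c \<cdot>\<^sub>m X) Z = c * tr_inner X Z"
  unfolding tr_inner_def by (auto simp: sum_distrib_left mult.assoc)

lemma tr_smult_right: "X \<in> carrier_mat p q \<Longrightarrow> Z \<in> carrier_mat p q \<Longrightarrow> tr_inner X (c \<cdot>\<^sub>m Z) = c * tr_inner X Z"
  unfolding tr_inner_def by (auto simp: sum_distrib_left mult.left_commute)

lemma tr_zero_right: "tr_inner X (0\<^sub>m (dim_row X) (dim_col X)) = 0"
  unfolding tr_inner_def by simp

lemma tr_adj_right:
  assumes X: "X \<in> carrier_mat p k" and Z: "Z \<in> carrier_mat k q" and Y: "Y \<in> carrier_mat p q"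
  shows "tr_inner (X * Z) Y = tr_inner X (Y * transpose_mat Z)"
proof -
  have "tr_inner (X * Z) Y = (\<Sum>i<p. \<Sum>j<q. (\<Sum>l<k. X $$ (i,l) * Z $$ (l,j)) * Y $$ (i,j))"
    using X Z by (auto simp: tr_inner_def scalar_prod_def lessThan_atLeast0 intro!: sum.cong)
  also have "\<dots> = (\<Sum>i<p. \<Sum>j<q. \<Sum>l<k. X $$ (i,l) * Z $$ (l,j) * Y $$ (i,j))"
    by (simp add: sum_distrib_right)
  also have "\<dots> = (\<Sum>i<p. \<Sum>l<k. \<Sum>j<q. X $$ (i,l) * Z $$ (l,j) * Y $$ (i,j))"
    by (rule sum.cong[OF refl], rule sum.swap)
  also have "\<dots> = (\<Sum>i<p. \<Sum>l<k. X $$ (i,l) * (\<Sum>j<q. Y $$ (i,j) * Z $$ (l,j)))"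
    by (simp add: sum_distrib_left mult_ac)
  also have "\<dots> = tr_inner X (Y * transpose_mat Z)"
    using X Z Y by (auto simp: tr_inner_def scalar_prod_def lessThan_atLeast0 intro!: sum.cong)
  finally show ?thesis .
qed

lemma tr_adj_left:
  assumes Z: "Z \<in> carrier_mat p k" and X: "X \<in> carrier_mat k q" and Y: "Y \<in> carrier_mat p q"
  shows "tr_inner (Z * X) Y = tr_inner X (transpose_mat Z * Y)"
proof -
  have "tr_inner (Z * X) Y = (\<Sum>i<p. \<Sum>j<q. (\<Sum>l<k. Z $$ (i,l) * X $$ (l,j)) * Y $$ (i,j))"
    using X Z by (auto simp: tr_inner_def scalar_prod_def lessThan_atLeast0 intro!: sum.cong)
  also have "\<dots> = (\<Sum>i<p. \<Sum>j<q. \<Sum>l<k. Z $$ (i,l) * X $$ (l,j) * Y $$ (i,j))"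
    by (simp add: sum_distrib_right)
  also have "\<dots> = (\<Sum>i<p. \<Sum>l<k. \<Sum>j<q. Z $$ (i,l) * X $$ (l,j) * Y $$ (i,j))"
    by (rule sum.cong[OF refl], rule sum.swap)
  also have "\<dots> = (\<Sum>l<k. \<Sum>i<p. \<Sum>j<q. Z $$ (i,l) * X $$ (l,j) * Y $$ (i,j))"
    by (rule sum.swap)
  also have "\<dots> = (\<Sum>l<k. \<Sum>j<q. \<Sum>i<p. Z $$ (i,l) * X $$ (l,j) * Y $$ (i,j))"
    by (rule sum.cong[OF refl], rule sum.swap)
  also have "\<dots> = (\<Sum>l<k. \<Sum>j<q. X $$ (l,j) * (\<Sum>i<p. Z $$ (i,l) * Y $$ (i,j)))"
    by (simp add: sum_distrib_left mult_ac)
  also have "\<dots> = tr_inner X (transpose_mat Z * Y)"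
    using X Z Y by (auto simp: tr_inner_def scalar_prod_def lessThan_atLeast0 intro!: sum.cong)
  finally show ?thesis .
qed

lemma tr_self_nonneg: "tr_inner X X \<ge> 0"
  unfolding tr_inner_def by (auto intro!: sum_nonneg)

lemma tr_self_zero:
  assumes X: "X \<in> carrier_mat p q" and z: "tr_inner X X = 0"
  shows "X = 0\<^sub>m p q"
proof (rule eq_matI)
  fix i j assume "i < dim_row (0\<^sub>m p q)" "j < dim_col (0\<^sub>m p q)"
  hence i: "i < p" and j: "j < q" by auto
  have "(\<Sum>i<p. \<Sum>j<q. X $$ (i,j) * X $$ (i,j)) = 0" using z tr_inner_alt[OF X] by simp
  hence "\<forall>i\<in>{..<p}. (\<Sum>j<q. X $$ (i,j) * X $$ (i,j)) = 0"
    by (subst (asm) sum_nonneg_eq_0_iff) (auto intro!: sum_nonneg)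
  hence "(\<Sum>j<q. X $$ (i,j) * X $$ (i,j)) = 0" using i by auto
  hence "\<forall>j\<in>{..<q}. X $$ (i,j) * X $$ (i,j) = 0"
    by (subst (asm) sum_nonneg_eq_0_iff) auto
  thus "X $$ (i,j) = 0\<^sub>m p q $$ (i,j)" using i j by auto
qed (use X in auto)

lemma frob_tr: "frob_norm X = sqrt (tr_inner X X)"
  unfolding frob_norm_def tr_inner_def by (simp add: power2_eq_square)

lemma frob_nonneg: "frob_norm X \<ge> 0" unfolding frob_norm_def by (simp add: sum_nonneg)

lemma frob_L2: "X \<in> carrier_mat p q \<Longrightarrow>
  frob_norm X = L2_set (\<lambda>(i,j). X $$ (i,j)) ({..<p} \<times> {..<q})"
  unfolding frob_norm_def L2_set_def by (simp add: sum.cartesian_product case_prod_beta)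

lemma tr_CS:
  assumes X: "X \<in> carrier_mat p q" and Y: "Y \<in> carrier_mat p q"
  shows "tr_inner X Y \<le> frob_norm X * frob_norm Y"
proof -
  have "tr_inner X Y = (\<Sum>ij\<in>{..<p} \<times> {..<q}. (\<lambda>(i,j). X $$ (i,j)) ij * (\<lambda>(i,j). Y $$ (i,j)) ij)"
    unfolding tr_inner_alt[OF X] by (simp add: sum.cartesian_product case_prod_beta)
  also have "\<dots> \<le> (\<Sum>ij\<in>{..<p} \<times> {..<q}. \<bar>(\<lambda>(i,j). X $$ (i,j)) ij\<bar> * \<bar>(\<lambda>(i,j). Y $$ (i,j)) ij\<bar>)"
    by (intro sum_mono) (metis abs_ge_self abs_mult)
  also have "\<dots> \<le> frob_norm X * frob_norm Y"
    unfolding frob_L2[OF X] frob_L2[OF Y] by (rule L2_set_mult_ineq)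
  finally show ?thesis .
qed

lemma frob_triangle:
  assumes X: "X \<in> carrier_mat p q" and Y: "Y \<in> carrier_mat p q"
  shows "frob_norm (X + Y) \<le> frob_norm X + frob_norm Y"
proof -
  have XY: "X + Y \<in> carrier_mat p q" using X Y by simp
  have "frob_norm (X + Y) = L2_set (\<lambda>ij. (\<lambda>(i,j). X $$ (i,j)) ij + (\<lambda>(i,j). Y $$ (i,j)) ij) ({..<p} \<times> {..<q})"
    unfolding frob_L2[OF XY] using X Y by (intro L2_set_cong) auto
  also have "\<dots> \<le> frob_norm X + frob_norm Y"
    unfolding frob_L2[OF X] frob_L2[OF Y] by (rule L2_set_triangle_ineq)
  finally show ?thesis .
qed

lemma frob_smult: "frob_norm (c \<cdot>\<^sub>m X) = \<bar>c\<bar> * frob_norm X"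
proof -
  have "frob_norm (c \<cdot>\<^sub>m X) = sqrt (c^2 * (\<Sum>i<dim_row X. \<Sum>j<dim_col X. (X $$ (i,j))^2))"
    unfolding frob_norm_def by (simp add: power_mult_distrib sum_distrib_left)
  moreover have "(\<Sum>i<dim_row X. \<Sum>j<dim_col X. (X $$ (i,j))^2) \<ge> 0"
    by (intro sum_nonneg) auto
  ultimately show ?thesis unfolding frob_norm_def by (simp add: real_sqrt_mult)
qed

lemma frob_zero_iff:
  assumes X: "X \<in> carrier_mat p q"
  shows "frob_norm X = 0 \<longleftrightarrow> X = 0\<^sub>m p q"
proof
  assume "frob_norm X = 0"
  hence "tr_inner X X = 0" unfolding frob_tr using tr_self_nonneg[of X] by simp
  thus "X = 0\<^sub>m p q" using tr_self_zero[OF X] by simp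
qed (simp add: frob_norm_def)

lemma vec_CS:
  fixes u w :: "real vec"
  assumes u: "u \<in> carrier_vec n" and w: "w \<in> carrier_vec n"
  shows "u \<bullet> w \<le> sqrt (u \<bullet> u) * sqrt (w \<bullet> w)"
proof -
  have L2: "sqrt (v \<bullet> v) = L2_set (\<lambda>i. v $ i) {0..<n}" if "v \<in> carrier_vec n" for v :: "real vec"
    using that unfolding L2_set_def scalar_prod_def by (simp add: power2_eq_square)
  have "u \<bullet> w = (\<Sum>i\<in>{0..<n}. u $ i * w $ i)" using w unfolding scalar_prod_def by simp
  also have "\<dots> \<le> (\<Sum>i\<in>{0..<n}. \<bar>u $ i\<bar> * \<bar>w $ i\<bar>)"
    by (intro sum_mono) (metis abs_ge_self abs_mult)
  also have "\<dots> \<le> sqrt (u \<bullet> u) * sqrt (w \<bullet> w)" unfolding L2[OF u] L2[OF w]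
    by (rule L2_set_mult_ineq)
  finally show ?thesis .
qed

lemma self_sprod_nonneg: "(v :: real vec) \<bullet> v \<ge> 0"
  unfolding scalar_prod_def by (auto intro: sum_nonneg)

lemma quad_form:
  fixes B :: "real mat"
  assumes B: "B \<in> carrier_mat p q" and x: "x \<in> carrier_vec q"
  shows "(B *\<^sub>v x) \<bullet> (B *\<^sub>v x) = x \<bullet> ((transpose_mat B * B) *\<^sub>v x)"
proof -
  have "(B *\<^sub>v x) \<bullet> (B *\<^sub>v x) = (transpose_mat B *\<^sub>v (B *\<^sub>v x)) \<bullet> x"
    using transpose_vec_mult_scalar[OF B x, of "B *\<^sub>v x"] B x by simp
  also have "\<dots> = x \<bullet> (transpose_mat B *\<^sub>v (B *\<^sub>v x))"
    using B x by (intro comm_scalar_prod[of _ q]) auto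
  also have "transpose_mat B *\<^sub>v (B *\<^sub>v x) = (transpose_mat B * B) *\<^sub>v x"
    using B x by (simp add: assoc_mult_mat_vec)
  finally show ?thesis .
qed


definition dmat :: "nat \<Rightarrow> (nat \<Rightarrow> real) \<Rightarrow> real mat" where
  "dmat n d = mat n n (\<lambda>(i,j). if i = j then d i else 0)"

lemma dmat_carrier[simp]: "dmat n d \<in> carrier_mat n n" unfolding dmat_def by simp

lemma dmat_transpose[simp]: "transpose_mat (dmat n d) = dmat n d"
  unfolding dmat_def by (rule eq_matI) auto

lemma dmat_mult: "dmat n a * dmat n b = dmat n (\<lambda>i. a i * b i)"
proof (rule eq_matI)
  fix i j assume "i < dim_row (dmat n (\<lambda>i. a i * b i))" "j < dim_col (dmat n (\<lambda>i. a i * b i))"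
  hence i: "i < n" and j: "j < n" by (auto simp: dmat_def)
  have "(dmat n a * dmat n b) $$ (i,j) = (\<Sum>k\<in>{0..<n}. (if i = k then a i else 0) * (if k = j then b k else 0))"
    using i j by (simp add: dmat_def scalar_prod_def)
  also have "\<dots> = (\<Sum>k\<in>{0..<n}. if k = i then (if i = j then a i * b i else 0) else 0)"
    by (rule sum.cong) auto
  also have "\<dots> = dmat n (\<lambda>i. a i * b i) $$ (i,j)" using i j by (simp add: dmat_def)
  finally show "(dmat n a * dmat n b) $$ (i,j) = dmat n (\<lambda>i. a i * b i) $$ (i,j)" .
qed (auto simp: dmat_def)

lemma tr_dmat: "tr_inner (dmat n a) (dmat n b) = (\<Sum>i<n. a i * b i)"
proof -
  have "tr_inner (dmat n a) (dmat n b) = (\<Sum>i<n. \<Sum>j<n. if j = i then a i * b i else 0)"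
    unfolding tr_inner_def dmat_def by (intro sum.cong refl) auto
  also have "\<dots> = (\<Sum>i<n. a i * b i)" by (rule sum.cong) (auto simp: sum.delta)
  finally show ?thesis .
qed

lemma sum_if_mult: "(\<Sum>k\<in>{0..<(n::nat)}. (if i = k then c else 0) * (f k :: real)) = (if i < n then c * f i else 0)"
proof -
  have "(\<Sum>k\<in>{0..<n}. (if i = k then c else 0) * f k) = (\<Sum>k\<in>{0..<n}. if i = k then c * f k else 0)"
    by (rule sum.cong) auto
  also have "\<dots> = (if i \<in> {0..<n} then c * f i else 0)" by (subst sum.delta') auto
  finally show ?thesis by simp
qed

lemma dmat_quad: "y \<in> carrier_vec n \<Longrightarrow> y \<bullet> (dmat n d *\<^sub>v y) = (\<Sum>i<n. d i * (y $ i)^2)"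
proof -
  assume y: "y \<in> carrier_vec n"
  have "y \<bullet> (dmat n d *\<^sub>v y) = (\<Sum>i<n. y $ i * (\<Sum>k\<in>{0..<n}. (if i = k then d i else 0) * y $ k))"
    using y by (auto simp: dmat_def scalar_prod_def lessThan_atLeast0 intro!: sum.cong)
  also have "\<dots> = (\<Sum>i<n. d i * (y $ i)^2)"
    by (rule sum.cong) (auto simp: sum_if_mult power2_eq_square)
  finally show ?thesis .
qed

lemma proots_lin_prod: "proots (\<Prod>a\<leftarrow>as. [:- a, 1:]) = mset (as :: real list)"
proof (induction as)
  case (Cons a as)
  have "(\<Prod>a\<leftarrow>as. [:- a, 1:]) \<noteq> (0 :: real poly)" by (auto simp: prod_list_zero_iff)
  hence "proots ([:- a, 1:] * (\<Prod>a\<leftarrow>as. [:- a, 1:])) = proots [:- a, 1:] + proots (\<Prod>a\<leftarrow>as. [:- a, 1:])"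
    by (intro proots_mult) auto
  thus ?case using Cons by (simp only: prod_list.Cons list.map proots_linear_factor) simp
qed simp

lemma gram_exists:
  fixes A :: "real mat"
  assumes A: "A \<in> carrier_mat n n"
  shows "\<exists>Q d. Q \<in> carrier_mat n n \<and> transpose_mat Q * Q = 1\<^sub>m n \<and> Q * transpose_mat Q = 1\<^sub>m n
    \<and> (\<forall>i<n. d i \<ge> 0) \<and> transpose_mat (A * Q) * (A * Q) = dmat n d
    \<and> transpose_mat A * A = Q * dmat n d * transpose_mat Q
    \<and> singular_values A = mset (map (\<lambda>i. sqrt (d i)) [0..<n])"
proof -
  define G where "G = transpose_mat A * A"
  have G: "G \<in> carrier_mat n n" unfolding G_def using A by simp
  have symG: "transpose_mat G = G" unfolding G_def using A
    by (simp add: transpose_mult[of _ n n _ n])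
  obtain Q D where Q: "Q \<in> carrier_mat n n" and D: "D \<in> carrier_mat n n" and diag: "diagonal_mat D"
    and QQ: "transpose_mat Q * Q = 1\<^sub>m n" and GQ: "G = Q * D * transpose_mat Q"
    using spectral[OF G symG] by blast
  define d where "d i = D $$ (i,i)" for i
  have Dd: "D = dmat n d" unfolding dmat_def d_def using D diag
    by (intro eq_matI) (auto simp: diagonal_mat_def)
  have QTc: "transpose_mat Q \<in> carrier_mat n n" using Q by simp
  have QQ': "Q * transpose_mat Q = 1\<^sub>m n" using mat_mult_left_right_inverse[OF QTc Q QQ] .
  have AQ: "transpose_mat (A * Q) * (A * Q) = D"
  proof -
    have "transpose_mat (A * Q) * (A * Q) = transpose_mat Q * G * Q"
      unfolding G_def using A Q
      by (simp add: transpose_mult[of _ n n _ n] assoc_mult_mat[of _ n n _ n _ n])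
    also have "\<dots> = (transpose_mat Q * Q) * D * (transpose_mat Q * Q)"
      unfolding GQ using Q D by (simp add: assoc_mult_mat[of _ n n _ n _ n])
    also have "\<dots> = D" using QQ D by simp
    finally show ?thesis .
  qed
  have dpos: "d i \<ge> 0" if i: "i < n" for i
  proof -
    have "d i = (transpose_mat (A * Q) * (A * Q)) $$ (i,i)" unfolding AQ d_def ..
    also have "\<dots> = col (A * Q) i \<bullet> col (A * Q) i" using A Q i by (simp add: row_transpose)
    finally show ?thesis using self_sprod_nonneg by simp
  qed
  have sim: "similar_mat G D" unfolding similar_mat_def similar_mat_wit_def
    by (rule exI[of _ Q], rule exI[of _ "transpose_mat Q"]) (use G D Q QQ QQ' GQ in \<open>auto simp: Let_def\<close>)
  have ut: "upper_triangular D" using diag D unfolding upper_triangular_def diagonal_mat_def by auto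
  have "char_poly G = (\<Prod>a\<leftarrow>diag_mat D. [:- a, 1:])"
    unfolding char_poly_similar[OF sim] by (rule char_poly_upper_triangular[OF D ut])
  hence "proots (char_poly G) = mset (diag_mat D)" by (simp add: proots_lin_prod)
  also have "diag_mat D = map d [0..<n]" unfolding diag_mat_def d_def using D by simp
  finally have "singular_values A = mset (map (\<lambda>i. sqrt (d i)) [0..<n])"
    unfolding singular_values_def G_def by (simp add: multiset.map_comp o_def)
  thus ?thesis using Q QQ QQ' dpos AQ GQ unfolding Dd G_def by blast
qed


lemma proj_contr:
  fixes P :: "real mat"
  assumes P: "P \<in> carrier_mat n n" and sym: "transpose_mat P = P" and idem: "P * P = P"
    and x: "x \<in> carrier_vec n"
  shows "x \<bullet> (P *\<^sub>v x) \<le> x \<bullet> x"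
proof -
  define w where "w = P *\<^sub>v x"
  have w: "w \<in> carrier_vec n" unfolding w_def using P x by simp
  have ww: "w \<bullet> w = x \<bullet> w" unfolding w_def using quad_form[OF P x] sym idem by simp
  have wx: "w \<bullet> x = x \<bullet> w" using comm_scalar_prod[OF w x] .
  have "0 \<le> (x - w) \<bullet> (x - w)" by (rule self_sprod_nonneg)
  also have "\<dots> = x \<bullet> x - x \<bullet> w - (w \<bullet> x - w \<bullet> w)"
    using x w by (simp add: minus_scalar_prod_distrib[of _ n] scalar_prod_minus_distrib[of _ n])
  finally show ?thesis using ww wx unfolding w_def by simp
qed

lemma contr_of_gram:
  fixes B P :: "real mat"
  assumes B: "B \<in> carrier_mat n n" and BB: "transpose_mat B * B = P"
    and sym: "transpose_mat P = P" and idem: "P * P = P"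
  shows "\<forall>x\<in>carrier_vec n. (B *\<^sub>v x) \<bullet> (B *\<^sub>v x) \<le> 1^2 * (x \<bullet> x)"
proof
  fix x :: "real vec" assume x: "x \<in> carrier_vec n"
  have P: "P \<in> carrier_mat n n" using BB B by auto
  show "(B *\<^sub>v x) \<bullet> (B *\<^sub>v x) \<le> 1^2 * (x \<bullet> x)"
    using quad_form[OF B x] BB proj_contr[OF P sym idem x] by simp
qed

lemma sq_sum_le: "(\<forall>i\<in>S. (a i :: real) \<ge> 0) \<Longrightarrow> finite S \<Longrightarrow> (\<Sum>i\<in>S. (a i)^2) \<le> (\<Sum>i\<in>S. a i)^2"
proof -
  assume a: "\<forall>i\<in>S. a i \<ge> 0" and S: "finite S"
  have "(\<Sum>i\<in>S. (a i)^2) \<le> (\<Sum>i\<in>S. a i * (\<Sum>j\<in>S. a j))"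
    unfolding power2_eq_square
    by (intro sum_mono mult_left_mono) (use a S in \<open>auto intro: member_le_sum\<close>)
  also have "\<dots> = (\<Sum>i\<in>S. a i)^2" by (simp add: power2_eq_square sum_distrib_right)
  finally show ?thesis .
qed

locale gram_data =
  fixes n :: nat and A Q :: "real mat" and d :: "nat \<Rightarrow> real"
  assumes A: "A \<in> carrier_mat n n" and Q: "Q \<in> carrier_mat n n"
  and QQ: "transpose_mat Q * Q = 1\<^sub>m n" and QQ': "Q * transpose_mat Q = 1\<^sub>m n"
  and dpos: "\<forall>i<n. d i \<ge> 0" and AQ: "transpose_mat (A * Q) * (A * Q) = dmat n d"
  and G: "transpose_mat A * A = Q * dmat n d * transpose_mat Q"
  and sv: "singular_values A = mset (map (\<lambda>i. sqrt (d i)) [0..<n])"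
begin

lemma dpos': "i < n \<Longrightarrow> d i \<ge> 0" using dpos by simp

lemma QT: "transpose_mat Q \<in> carrier_mat n n" using Q by simp
lemma AQc: "A * Q \<in> carrier_mat n n" using A Q by simp

lemma nuc: "nuclear_norm A = (\<Sum>i<n. sqrt (d i))"
  unfolding nuclear_norm_def sv sum_mset_sum_list interv_sum_list_conv_sum_set_nat
  by (simp add: lessThan_atLeast0)

lemma spec: "spectral_norm A = Max (insert 0 ((\<lambda>i. sqrt (d i)) ` {0..<n}))"
  unfolding spectral_norm_def sv by simp

lemma spec_nonneg: "spectral_norm A \<ge> 0" unfolding spec by simp

lemma d_le_spec: "i < n \<Longrightarrow> d i \<le> (spectral_norm A)^2"
proof -
  assume i: "i < n"
  have "sqrt (d i) \<le> spectral_norm A" unfolding spec using i by (intro Max_ge) auto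
  hence "(sqrt (d i))^2 \<le> (spectral_norm A)^2" using dpos'[OF i] by (intro power_mono) auto
  thus ?thesis using dpos'[OF i] by simp
qed

lemma AQQ: "A * Q * transpose_mat Q = A"
  using assoc_mult_mat[OF A Q QT] QQ' A by simp

lemma tr_cols: "B \<in> carrier_mat n n \<Longrightarrow> tr_inner B A = (\<Sum>i<n. (B *\<^sub>v col Q i) \<bullet> (A *\<^sub>v col Q i))"
proof -
  assume B: "B \<in> carrier_mat n n"
  have "tr_inner B A = tr_inner (B * Q) (A * Q)"
    using tr_adj_right[OF B Q AQc] AQQ by simp
  also have "\<dots> = (\<Sum>j<n. col (B * Q) j \<bullet> col (A * Q) j)"
    using B Q A by (intro tr_inner_cols) auto
  also have "\<dots> = (\<Sum>i<n. (B *\<^sub>v col Q i) \<bullet> (A *\<^sub>v col Q i))"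
    using B Q A by (intro sum.cong refl) auto
  finally show ?thesis .
qed

lemma Aq_norm: "i < n \<Longrightarrow> (A *\<^sub>v col Q i) \<bullet> (A *\<^sub>v col Q i) = d i"
proof -
  assume i: "i < n"
  have "d i = (transpose_mat (A * Q) * (A * Q)) $$ (i,i)" unfolding AQ dmat_def using i by simp
  also have "\<dots> = col (A * Q) i \<bullet> col (A * Q) i" using A Q i by (simp add: row_transpose)
  finally show ?thesis using A Q i by simp
qed

lemma q_norm: "i < n \<Longrightarrow> col Q i \<bullet> col Q i = 1"
proof -
  assume i: "i < n"
  have "col Q i \<bullet> col Q i = (transpose_mat Q * Q) $$ (i,i)" using Q i by (simp add: row_transpose)
  thus ?thesis using QQ i by simp
qed

lemma N1:
  assumes B: "B \<in> carrier_mat n n" and c: "c \<ge> 0"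
    and contr: "\<forall>x\<in>carrier_vec n. (B *\<^sub>v x) \<bullet> (B *\<^sub>v x) \<le> c^2 * (x \<bullet> x)"
  shows "tr_inner B A \<le> c * nuclear_norm A"
proof -
  have "tr_inner B A = (\<Sum>i<n. (B *\<^sub>v col Q i) \<bullet> (A *\<^sub>v col Q i))" using tr_cols[OF B] .
  also have "\<dots> \<le> (\<Sum>i<n. c * sqrt (d i))"
  proof (rule sum_mono)
    fix i assume "i \<in> {..<n}" hence i: "i < n" by simp
    have qi: "col Q i \<in> carrier_vec n" using Q i by simp
    have "(B *\<^sub>v col Q i) \<bullet> (A *\<^sub>v col Q i) \<le> sqrt ((B *\<^sub>v col Q i) \<bullet> (B *\<^sub>v col Q i)) * sqrt ((A *\<^sub>v col Q i) \<bullet> (A *\<^sub>v col Q i))"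
      using B A qi by (intro vec_CS[of _ n]) auto
    also have "\<dots> \<le> sqrt (c^2) * sqrt (d i)"
    proof -
      have "(B *\<^sub>v col Q i) \<bullet> (B *\<^sub>v col Q i) \<le> c^2" using contr qi q_norm[OF i] by auto
      hence "sqrt ((B *\<^sub>v col Q i) \<bullet> (B *\<^sub>v col Q i)) \<le> sqrt (c^2)" by (rule real_sqrt_le_mono)
      thus ?thesis unfolding Aq_norm[OF i] by (rule mult_right_mono) (simp add: dpos'[OF i])
    qed
    also have "\<dots> = c * sqrt (d i)" using c by simp
    finally show "(B *\<^sub>v col Q i) \<bullet> (A *\<^sub>v col Q i) \<le> c * sqrt (d i)" .
  qed
  also have "\<dots> = c * nuclear_norm A" unfolding nuc by (simp add: sum_distrib_left)
  finally show ?thesis .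
qed

lemma trAA: "tr_inner A A = (\<Sum>i<n. d i)"
  unfolding tr_cols[OF A] by (intro sum.cong refl) (simp add: Aq_norm)

lemma nuc_nonneg: "nuclear_norm A \<ge> 0" unfolding nuc by (intro sum_nonneg) (simp add: dpos')

lemma frob_le_nuc: "frob_norm A \<le> nuclear_norm A"
proof -
  have "(\<Sum>i<n. d i) = (\<Sum>i<n. (sqrt (d i))^2)" by (intro sum.cong refl) (simp add: dpos')
  also have "\<dots> \<le> (\<Sum>i<n. sqrt (d i))^2" by (rule sq_sum_le) (auto simp: dpos' less_imp_le)
  finally have "sqrt (\<Sum>i<n. d i) \<le> sqrt ((\<Sum>i<n. sqrt (d i))^2)" by (rule real_sqrt_le_mono)
  also have "\<dots> = (\<Sum>i<n. sqrt (d i))"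
  proof -
    have "(\<Sum>i<n. sqrt (d i)) \<ge> 0" by (intro sum_nonneg) (simp add: dpos')
    thus ?thesis by simp
  qed
  finally show ?thesis unfolding frob_tr trAA nuc .
qed

lemma spec_contr:
  "\<forall>x\<in>carrier_vec n. (A *\<^sub>v x) \<bullet> (A *\<^sub>v x) \<le> (spectral_norm A)^2 * (x \<bullet> x)"
proof
  fix x :: "real vec" assume x: "x \<in> carrier_vec n"
  define y where "y = transpose_mat Q *\<^sub>v x"
  have y: "y \<in> carrier_vec n" unfolding y_def using Q x by simp
  have "(A *\<^sub>v x) \<bullet> (A *\<^sub>v x) = x \<bullet> ((Q * dmat n d * transpose_mat Q) *\<^sub>v x)"
    using quad_form[OF A x] G by simp
  also have "(Q * dmat n d * transpose_mat Q) *\<^sub>v x = Q *\<^sub>v (dmat n d *\<^sub>v y)"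
    unfolding y_def using Q x
    by (simp add: assoc_mult_mat_vec[of _ n n _ n] )
  also have "x \<bullet> (Q *\<^sub>v (dmat n d *\<^sub>v y)) = y \<bullet> (dmat n d *\<^sub>v y)"
  proof -
    have w: "dmat n d *\<^sub>v y \<in> carrier_vec n" by (metis dmat_carrier mult_mat_vec_carrier y)
    show ?thesis using transpose_vec_mult_scalar[OF Q w x] unfolding y_def by simp
  qed
  also have "\<dots> = (\<Sum>i<n. d i * (y $ i)^2)" using dmat_quad[OF y] .
  also have "\<dots> \<le> (\<Sum>i<n. (spectral_norm A)^2 * (y $ i)^2)"
    by (intro sum_mono mult_right_mono d_le_spec) auto

  also have "\<dots> = (spectral_norm A)^2 * (y \<bullet> y)"
    using y by (simp add: sum_distrib_left scalar_prod_def power2_eq_square lessThan_atLeast0)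
  also have "y \<bullet> y = x \<bullet> x"
  proof -
    have "y \<bullet> y = x \<bullet> ((transpose_mat (transpose_mat Q) * transpose_mat Q) *\<^sub>v x)"
      unfolding y_def using quad_form[OF QT x] .
    thus ?thesis using QQ' x by simp
  qed
  finally show "(A *\<^sub>v x) \<bullet> (A *\<^sub>v x) \<le> (spectral_norm A)^2 * (x \<bullet> x)" by simp
qed

end


context gram_data begin

lemma polar_exists:
  "\<exists>B. B \<in> carrier_mat n n \<and> tr_inner B A = nuclear_norm A \<and>
    transpose_mat (transpose_mat B * B) = transpose_mat B * B \<and>
    (transpose_mat B * B) * (transpose_mat B * B) = transpose_mat B * B \<and>
    (\<forall>k U. U \<in> carrier_mat n k \<longrightarrow> transpose_mat U * A = 0\<^sub>m k n \<longrightarrow> transpose_mat U * B = 0\<^sub>m k n) \<and>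
    (\<forall>k V. V \<in> carrier_mat n k \<longrightarrow> A * V = 0\<^sub>m n k \<longrightarrow> B * V = 0\<^sub>m n k)"
proof -
  define M where "M = A * Q"
  have Mc: "M \<in> carrier_mat n n" unfolding M_def using A Q by simp
  have MTc: "transpose_mat M \<in> carrier_mat n n" using Mc by simp
  have MM: "transpose_mat M * M = dmat n d" unfolding M_def using AQ .
  define p where "p i = (if d i > 0 then 1 / sqrt (d i) else 0)" for i
  define e where "e i = p i * (d i * p i)" for i
  define Dp where "Dp = dmat n p"
  have Dpc: "Dp \<in> carrier_mat n n" unfolding Dp_def by simp
  have QTc: "transpose_mat Q \<in> carrier_mat n n" using Q by simp
  define B where "B = M * Dp * transpose_mat Q"
  have Bc: "B \<in> carrier_mat n n" unfolding B_def using Mc Dpc QTc by simp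
  have cm: "\<And>X Y. X \<in> carrier_mat n n \<Longrightarrow> Y \<in> carrier_mat n n \<Longrightarrow> X * Y \<in> carrier_mat n n" by auto
  note carr = Mc MTc Dpc QTc Q A cm dmat_carrier
  note assoc = assoc_mult_mat[of _ n n _ n _ n]
  have MTMX: "transpose_mat M * (M * X) = dmat n d * X" if "X \<in> carrier_mat n n" for X
    using that carr by (simp flip: MM add: assoc)
  have QTQX: "transpose_mat Q * (Q * X) = X" if "X \<in> carrier_mat n n" for X
    using that carr by (simp flip: assoc add: QQ)
  have DDX: "dmat n a * (dmat n b * X) = dmat n (\<lambda>i. a i * b i) * X" if "X \<in> carrier_mat n n" for a b X
    using that by (simp flip: assoc add: dmat_mult)
  have pd: "p i * d i = sqrt (d i)" if "i < n" for i
    using dpos'[OF that] unfolding p_def by (auto simp: real_div_sqrt)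
  have ee: "e i * e i = e i" for i
    unfolding e_def p_def by auto
  have "tr_inner B A = tr_inner (M * Dp) (A * Q)"
    unfolding B_def using tr_adj_right[of "M * Dp" n n "transpose_mat Q" n A] carr by simp
  also have "\<dots> = tr_inner Dp (transpose_mat M * M)"
    unfolding M_def[symmetric] using tr_adj_left[OF Mc Dpc Mc] .
  also have "\<dots> = (\<Sum>i<n. p i * d i)" unfolding MM Dp_def tr_dmat ..
  also have "\<dots> = nuclear_norm A" unfolding nuc by (intro sum.cong refl) (simp add: pd)
  finally have tr: "tr_inner B A = nuclear_norm A" .
  have BT: "transpose_mat B = Q * (Dp * transpose_mat M)"
    unfolding B_def using carr
    by (simp add: transpose_mult[of _ n n _ n] Dp_def)
  have BB: "transpose_mat B * B = Q * (dmat n e * transpose_mat Q)"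
  proof -
    have "transpose_mat B * B = Q * (Dp * (transpose_mat M * (M * (Dp * transpose_mat Q))))"
      unfolding BT by (simp add: carr assoc B_def)
    also have "\<dots> = Q * (dmat n e * transpose_mat Q)"
      by (simp add: carr MTMX[OF mult_carrier_mat[OF dmat_carrier QTc]] DDX[OF QTc]
          DDX[OF mult_carrier_mat[OF dmat_carrier QTc]] Dp_def e_def[abs_def])
    finally show ?thesis .
  qed
  have symBB: "transpose_mat (transpose_mat B * B) = transpose_mat B * B"
    unfolding BB using carr
    by (simp add: transpose_mult[OF Q mult_carrier_mat[OF dmat_carrier QTc]] transpose_mult[OF dmat_carrier QTc]
        assoc_mult_mat[OF Q dmat_carrier QTc])
  have idemBB: "(transpose_mat B * B) * (transpose_mat B * B) = transpose_mat B * B"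
    unfolding BB by (simp add: carr assoc QTQX[OF mult_carrier_mat[OF dmat_carrier QTc]] DDX[OF QTc] ee)
  have Uprop: "transpose_mat U * B = 0\<^sub>m k n" if U: "U \<in> carrier_mat n k" and UA: "transpose_mat U * A = 0\<^sub>m k n" for k U
  proof -
    have UT: "transpose_mat U \<in> carrier_mat k n" using U by simp
    have "transpose_mat U * B = transpose_mat U * (A * (Q * (Dp * transpose_mat Q)))"
      unfolding B_def M_def by (simp add: carr assoc)
    also have "\<dots> = (transpose_mat U * A) * (Q * (Dp * transpose_mat Q))"
      using carr UT by (simp add: assoc_mult_mat[OF UT A, of _ n])
    also have "\<dots> = 0\<^sub>m k n" unfolding UA using carr by simp
    finally show ?thesis .
  qed
  have Vprop: "B * V = 0\<^sub>m n k" if V: "V \<in> carrier_mat n k" and AV: "A * V = 0\<^sub>m n k" for k V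
  proof -
    define p2 where "p2 i = (if d i > 0 then 1 / (d i * sqrt (d i)) else 0)" for i
    have Dp2: "Dp = dmat n p2 * dmat n d"
      unfolding Dp_def dmat_mult p2_def p_def by (rule arg_cong[where f = "dmat n"]) (auto simp: fun_eq_iff)
    have QTV: "transpose_mat Q * V \<in> carrier_mat n k" using V QTc by simp
    have "dmat n d * (transpose_mat Q * V) = transpose_mat M * (M * (transpose_mat Q * V))"
      using assoc_mult_mat[OF MTc Mc QTV] MM by simp
    also have "M * (transpose_mat Q * V) = A * (Q * (transpose_mat Q * V))"
      unfolding M_def using assoc_mult_mat[OF A Q QTV] .
    also have "Q * (transpose_mat Q * V) = V"
      using assoc_mult_mat[OF Q QTc V] QQ' V by simp
    also have "transpose_mat M * (A * V) = 0\<^sub>m n k" unfolding AV using MTc by simp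
    finally have DQV: "dmat n d * (transpose_mat Q * V) = 0\<^sub>m n k" .
    have "B * V = M * (dmat n p2 * (dmat n d * (transpose_mat Q * V)))"
    proof -
      have PD: "dmat n p2 * dmat n d \<in> carrier_mat n n" by (rule mult_carrier_mat[OF dmat_carrier dmat_carrier])
      have MPD: "M * (dmat n p2 * dmat n d) \<in> carrier_mat n n" by (rule mult_carrier_mat[OF Mc PD])
      show ?thesis unfolding B_def Dp2
        by (simp add: assoc_mult_mat[OF MPD QTc V] assoc_mult_mat[OF Mc PD QTV]
          assoc_mult_mat[OF dmat_carrier dmat_carrier QTV])
    qed
    also have "\<dots> = 0\<^sub>m n k" unfolding DQV using Mc right_mult_zero_mat[OF dmat_carrier[of n p2]] by simp
    finally show ?thesis .
  qed
  show ?thesis using Bc tr symBB idemBB Uprop Vprop by blast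
qed

end


lemma contr_UVB:
  fixes U V B :: "real mat"
  assumes U: "U \<in> carrier_mat n r" and V: "V \<in> carrier_mat n r"
    and UU: "transpose_mat U * U = 1\<^sub>m r" and VV: "transpose_mat V * V = 1\<^sub>m r"
    and B: "B \<in> carrier_mat n n" and UB: "transpose_mat U * B = 0\<^sub>m r n" and BV: "B * V = 0\<^sub>m n r"
    and symB: "transpose_mat (transpose_mat B * B) = transpose_mat B * B"
    and idemB: "(transpose_mat B * B) * (transpose_mat B * B) = transpose_mat B * B"
  shows "\<forall>x\<in>carrier_vec n. ((U * transpose_mat V + B) *\<^sub>v x) \<bullet> ((U * transpose_mat V + B) *\<^sub>v x) \<le> 1^2 * (x \<bullet> x)"
proof -
  have UT: "transpose_mat U \<in> carrier_mat r n" and VT: "transpose_mat V \<in> carrier_mat r n"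
    and BT: "transpose_mat B \<in> carrier_mat n n" using U V B by auto
  have UVT: "U * transpose_mat V \<in> carrier_mat n n" using U VT by simp
  have VUT: "V * transpose_mat U \<in> carrier_mat n n" using V UT by simp
  have VVT: "V * transpose_mat V \<in> carrier_mat n n" using V VT by simp
  have BTB: "transpose_mat B * B \<in> carrier_mat n n" using BT B by simp
  have BTU: "transpose_mat B * U = 0\<^sub>m n r"
  proof -
    have "transpose_mat B * U = transpose_mat (transpose_mat U * B)"
      using transpose_mult[OF UT B] by simp
    thus ?thesis unfolding UB by simp
  qed
  have VTBT: "transpose_mat V * transpose_mat B = 0\<^sub>m r n"
  proof -
    have "transpose_mat V * transpose_mat B = transpose_mat (B * V)"
      using transpose_mult[OF B V] by simp
    thus ?thesis unfolding BV by simp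
  qed
  define M where "M = U * transpose_mat V + B"
  have Mc: "M \<in> carrier_mat n n" unfolding M_def using UVT B by simp
  have MT: "transpose_mat M = V * transpose_mat U + transpose_mat B"
    unfolding M_def using transpose_add[OF UVT B] transpose_mult[OF U VT] by simp
  have t1: "V * transpose_mat U * (U * transpose_mat V) = V * transpose_mat V"
  proof -
    have "V * transpose_mat U * (U * transpose_mat V) = V * (transpose_mat U * (U * transpose_mat V))"
      using assoc_mult_mat[OF V UT UVT] .
    also have "transpose_mat U * (U * transpose_mat V) = transpose_mat V"
      using assoc_mult_mat[OF UT U VT, symmetric] UU VT by simp
    finally show ?thesis .
  qed
  have t2: "V * transpose_mat U * B = 0\<^sub>m n n"
    using assoc_mult_mat[OF V UT B] UB V by simp
  have t3: "transpose_mat B * (U * transpose_mat V) = 0\<^sub>m n n"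
    using assoc_mult_mat[OF BT U VT, symmetric] BTU VT by simp
  define P where "P = V * transpose_mat V + transpose_mat B * B"
  have Pc: "P \<in> carrier_mat n n" unfolding P_def using VVT BTB by simp
  have MM: "transpose_mat M * M = P"
  proof -
    have "transpose_mat M * M = (V * transpose_mat U + transpose_mat B) * (U * transpose_mat V) +
        (V * transpose_mat U + transpose_mat B) * B"
      unfolding MT by (subst M_def, rule mult_add_distrib_mat[of _ n n]) (use VUT BT UVT B in auto)
    also have "(V * transpose_mat U + transpose_mat B) * (U * transpose_mat V) = V * transpose_mat V"
      using add_mult_distrib_mat[OF VUT BT UVT] t1 t3 VVT by simp
    also have "(V * transpose_mat U + transpose_mat B) * B = transpose_mat B * B"
      using add_mult_distrib_mat[OF VUT BT B] t2 BTB by simp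
    finally show ?thesis unfolding P_def .
  qed
  have symP: "transpose_mat P = P" unfolding P_def
    using transpose_add[OF VVT BTB] transpose_mult[OF V VT] symB by simp
  have s1: "V * transpose_mat V * (V * transpose_mat V) = V * transpose_mat V"
  proof -
    have "V * transpose_mat V * (V * transpose_mat V) = V * (transpose_mat V * (V * transpose_mat V))"
      using assoc_mult_mat[OF V VT VVT] .
    also have "transpose_mat V * (V * transpose_mat V) = transpose_mat V"
      using assoc_mult_mat[OF VT V VT, symmetric] VV VT by simp
    finally show ?thesis .
  qed
  have s2: "V * transpose_mat V * (transpose_mat B * B) = 0\<^sub>m n n"
  proof -
    have "V * transpose_mat V * (transpose_mat B * B) = V * ((transpose_mat V * transpose_mat B) * B)"
      using assoc_mult_mat[OF V VT BTB] assoc_mult_mat[OF VT BT B] by simp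
    thus ?thesis unfolding VTBT using V B by simp
  qed
  have s3: "transpose_mat B * B * (V * transpose_mat V) = 0\<^sub>m n n"
  proof -
    have "transpose_mat B * B * (V * transpose_mat V) = transpose_mat B * ((B * V) * transpose_mat V)"
      using assoc_mult_mat[OF BT B VVT] assoc_mult_mat[OF B V VT] by simp
    thus ?thesis unfolding BV using BT VT by simp
  qed
  have idemP: "P * P = P"
  proof -
    have "P * P = (V * transpose_mat V + transpose_mat B * B) * (V * transpose_mat V) +
        (V * transpose_mat V + transpose_mat B * B) * (transpose_mat B * B)"
      unfolding P_def by (rule mult_add_distrib_mat[of _ n n]) (use VVT BTB in auto)
    also have "(V * transpose_mat V + transpose_mat B * B) * (V * transpose_mat V) = V * transpose_mat V"
      using add_mult_distrib_mat[OF VVT BTB VVT] s1 s3 VVT by simp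
    also have "(V * transpose_mat V + transpose_mat B * B) * (transpose_mat B * B) = transpose_mat B * B"
      using add_mult_distrib_mat[OF VVT BTB BTB] s2 idemB BTB by simp
    finally show ?thesis unfolding P_def .
  qed
  show ?thesis using contr_of_gram[OF Mc MM symP idemP] unfolding M_def .
qed


locale tang =
  fixes n r :: nat and U V :: "real mat"
  assumes U: "U \<in> carrier_mat n r" and V: "V \<in> carrier_mat n r"
    and UU: "transpose_mat U * U = 1\<^sub>m r" and VV: "transpose_mat V * V = 1\<^sub>m r"
begin

definition "PU = U * transpose_mat U"
definition "PV = V * transpose_mat V"
definition "Rf X = (1\<^sub>m n - PU) * X * (1\<^sub>m n - PV)"
definition "PT X = X - Rf X"

abbreviation "T \<equiv> tangent_space n U V"

lemma UT: "transpose_mat U \<in> carrier_mat r n" using U by simp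
lemma VT: "transpose_mat V \<in> carrier_mat r n" using V by simp
lemma PUc: "PU \<in> carrier_mat n n" unfolding PU_def using U by simp
lemma PVc: "PV \<in> carrier_mat n n" unfolding PV_def using V by simp
lemma IPU: "1\<^sub>m n - PU \<in> carrier_mat n n" using PUc by (rule minus_carrier_mat)
lemma IPV: "1\<^sub>m n - PV \<in> carrier_mat n n" using PVc by (rule minus_carrier_mat)
lemma Rc: "X \<in> carrier_mat n n \<Longrightarrow> Rf X \<in> carrier_mat n n" unfolding Rf_def using IPU IPV by simp
lemma PTc: "X \<in> carrier_mat n n \<Longrightarrow> PT X \<in> carrier_mat n n" unfolding PT_def using Rc by (intro minus_carrier_mat)

lemma UT_IPU: "transpose_mat U * (1\<^sub>m n - PU) = 0\<^sub>m r n"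
proof -
  have "transpose_mat U * (1\<^sub>m n - PU) = transpose_mat U * 1\<^sub>m n - transpose_mat U * PU"
    using mult_minus_distrib_mat[OF UT one_carrier_mat PUc] .
  also have "transpose_mat U * PU = transpose_mat U"
    unfolding PU_def using assoc_mult_mat[OF UT U UT, symmetric] UU UT by simp
  finally show ?thesis using UT by simp
qed

lemma IPV_V: "(1\<^sub>m n - PV) * V = 0\<^sub>m n r"
proof -
  have "(1\<^sub>m n - PV) * V = 1\<^sub>m n * V - PV * V"
    using minus_mult_distrib_mat[OF one_carrier_mat PVc V] .
  also have "PV * V = V"
    unfolding PV_def using assoc_mult_mat[OF V VT V] VV V by simp
  finally show ?thesis using V by simp
qed

lemma UR: "X \<in> carrier_mat n n \<Longrightarrow> transpose_mat U * Rf X = 0\<^sub>m r n"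
proof -
  assume X: "X \<in> carrier_mat n n"
  have "transpose_mat U * Rf X = (transpose_mat U * (1\<^sub>m n - PU)) * X * (1\<^sub>m n - PV)"
    unfolding Rf_def using assoc_mult_mat[OF UT IPU X] assoc_mult_mat[OF UT _ IPV, of "(1\<^sub>m n - PU) * X"] IPU X
    by simp
  thus ?thesis unfolding UT_IPU using X left_mult_zero_mat[OF IPV] left_mult_zero_mat[OF X] by simp
qed

lemma RV: "X \<in> carrier_mat n n \<Longrightarrow> Rf X * V = 0\<^sub>m n r"
proof -
  assume X: "X \<in> carrier_mat n n"
  have "Rf X * V = ((1\<^sub>m n - PU) * X) * ((1\<^sub>m n - PV) * V)"
    unfolding Rf_def using assoc_mult_mat[OF _ IPV V, of "(1\<^sub>m n - PU) * X" n] IPU X by simp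
  thus ?thesis unfolding IPV_V using X IPU PUc by simp
qed

lemma perp_T:
  assumes Z: "Z \<in> carrier_mat n n" and UZ: "transpose_mat U * Z = 0\<^sub>m r n" and ZV: "Z * V = 0\<^sub>m n r"
    and Y: "Y \<in> T"
  shows "tr_inner Z Y = 0"
proof -
  from Y obtain Xa Yb where Xa: "Xa \<in> carrier_mat n r" and Yb: "Yb \<in> carrier_mat n r"
    and Yeq: "Y = U * transpose_mat Xa + Yb * transpose_mat V"
    unfolding tangent_space_def using U V by auto
  have XaT: "transpose_mat Xa \<in> carrier_mat r n" using Xa by simp
  have c1: "U * transpose_mat Xa \<in> carrier_mat n n" using U XaT by simp
  have c2: "Yb * transpose_mat V \<in> carrier_mat n n" using Yb VT by simp
  have "tr_inner Z (U * transpose_mat Xa) = tr_inner (U * transpose_mat Xa) Z" using tr_comm[OF Z c1] .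
  also have "\<dots> = tr_inner (transpose_mat Xa) (transpose_mat U * Z)" using tr_adj_left[OF U XaT Z] .
  also have "\<dots> = 0" unfolding UZ using XaT tr_zero_right[of "transpose_mat Xa"] by simp
  finally have 1: "tr_inner Z (U * transpose_mat Xa) = 0" .
  have "tr_inner Z (Yb * transpose_mat V) = tr_inner (Yb * transpose_mat V) Z" using tr_comm[OF Z c2] .
  also have "\<dots> = tr_inner Yb (Z * V)" using tr_adj_right[OF Yb VT Z] by simp
  also have "\<dots> = 0" unfolding ZV using Yb tr_zero_right[of Yb] by simp
  finally have 2: "tr_inner Z (Yb * transpose_mat V) = 0" .
  show ?thesis unfolding Yeq using tr_add_right[OF Z c1 c2] 1 2 by simp
qed

lemma PT_in_T:
  assumes X: "X \<in> carrier_mat n n"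
  shows "PT X \<in> T"
proof -
  define Y where "Y = (1\<^sub>m n - PU) * X"
  have Yc: "Y \<in> carrier_mat n n" unfolding Y_def using IPU X by simp
  have "Rf X = Y * (1\<^sub>m n - PV)" unfolding Rf_def Y_def ..
  also have "\<dots> = Y * 1\<^sub>m n - Y * PV" using mult_minus_distrib_mat[OF Yc one_carrier_mat PVc] .
  finally have R: "Rf X = Y - Y * PV" using Yc by simp
  have Y2: "Y = X - PU * X" unfolding Y_def using minus_mult_distrib_mat[OF one_carrier_mat PUc X] X by simp
  have YPV: "Y * PV \<in> carrier_mat n n" using Yc PVc by simp
  have PUX: "PU * X \<in> carrier_mat n n" using PUc X by simp
  have Yij: "Y $$ (i,j) = X $$ (i,j) - (PU * X) $$ (i,j)" if "i < n" "j < n" for i j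
    using that by (simp add: Y2 carrier_matD[OF PUc] carrier_matD[OF X])
  have "PT X = PU * X + Y * PV"
    unfolding PT_def R by (intro eq_matI) (use Yc YPV PUX X Yij in auto)
  also have "PU * X = U * transpose_mat (transpose_mat X * U)"
    unfolding PU_def using transpose_mult[OF _ U, of "transpose_mat X" n] X assoc_mult_mat[OF U UT X] by simp
  also have "Y * PV = (Y * V) * transpose_mat V"
    unfolding PV_def using assoc_mult_mat[OF Yc V VT] by simp
  finally have "PT X = U * transpose_mat (transpose_mat X * U) + (Y * V) * transpose_mat V" .
  moreover have "transpose_mat X * U \<in> carrier_mat n (dim_col U)" using X U by simp
  moreover have "Y * V \<in> carrier_mat n (dim_col V)" using Yc V by simp
  ultimately show ?thesis unfolding tangent_space_def by blast
qed

lemma T_diff: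
  assumes "A \<in> T" "B \<in> T"
  shows "A - B \<in> T"
proof -
  from assms obtain Xa Yb Xa' Yb' where Xa: "Xa \<in> carrier_mat n r" and Yb: "Yb \<in> carrier_mat n r"
    and Xa': "Xa' \<in> carrier_mat n r" and Yb': "Yb' \<in> carrier_mat n r"
    and A: "A = U * transpose_mat Xa + Yb * transpose_mat V"
    and B: "B = U * transpose_mat Xa' + Yb' * transpose_mat V"
    unfolding tangent_space_def using U V by auto
  have "A - B = U * transpose_mat (Xa - Xa') + (Yb - Yb') * transpose_mat V"
  proof -
    have e1: "U * transpose_mat (Xa - Xa') = U * transpose_mat Xa - U * transpose_mat Xa'"
      using mult_minus_distrib_mat[OF U, of "transpose_mat Xa" n "transpose_mat Xa'"] Xa Xa'
      by (simp add: transpose_minus)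
    have e2: "(Yb - Yb') * transpose_mat V = Yb * transpose_mat V - Yb' * transpose_mat V"
      using minus_mult_distrib_mat[OF Yb Yb' VT] .
    show ?thesis unfolding A B e1 e2 using Xa Xa' Yb Yb' U V
      by (intro eq_matI) auto
  qed
  moreover have "Xa - Xa' \<in> carrier_mat n (dim_col U)" "Yb - Yb' \<in> carrier_mat n (dim_col V)"
    using Xa Xa' Yb Yb' U V by auto
  ultimately show ?thesis unfolding tangent_space_def by blast
qed

lemma orth_proj_PT:
  assumes X: "X \<in> carrier_mat n n"
  shows "orth_proj T X = PT X"
  unfolding orth_proj_def
proof (rule the_equality)
  have "X - PT X = Rf X" unfolding PT_def using X Rc[OF X] by (intro eq_matI) auto
  thus "PT X \<in> T \<and> (\<forall>Y\<in>T. tr_inner (X - PT X) Y = 0)"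
    using PT_in_T[OF X] perp_T[OF Rc[OF X] UR[OF X] RV[OF X]] by simp
next
  fix P assume P: "P \<in> T \<and> (\<forall>Y\<in>T. tr_inner (X - P) Y = 0)"
  have D: "P - PT X \<in> T" using T_diff P PT_in_T[OF X] by simp
  have Pc: "P \<in> carrier_mat n n" using P U V unfolding tangent_space_def by auto
  have Dc: "P - PT X \<in> carrier_mat n n" using PTc[OF X] by (rule minus_carrier_mat)
  have "X - PT X = Rf X" unfolding PT_def using X Rc[OF X] by (intro eq_matI) auto
  hence h1: "tr_inner (X - PT X) (P - PT X) = 0" using perp_T[OF Rc[OF X] UR[OF X] RV[OF X] D] by simp
  have h2: "tr_inner (X - P) (P - PT X) = 0" using P D by blast
  have eqD: "P - PT X = (X - PT X) - (X - P)" using Pc PTc[OF X] X by (intro eq_matI) auto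
  have c1: "X - PT X \<in> carrier_mat n n" using PTc[OF X] by (rule minus_carrier_mat)
  have c2: "X - P \<in> carrier_mat n n" using Pc by (rule minus_carrier_mat)
  have "tr_inner (P - PT X) (P - PT X) = tr_inner (X - PT X) (P - PT X) - tr_inner (X - P) (P - PT X)"
    using tr_minus_left[OF c1 c2 Dc] unfolding eqD[symmetric] .
  hence "tr_inner (P - PT X) (P - PT X) = 0" using h1 h2 by simp
  hence "P - PT X = 0\<^sub>m n n" using tr_self_zero[OF Dc] by simp
  hence z: "(P - PT X) $$ (i,j) = 0" if "i < n" "j < n" for i j using that by simp
  show "P = PT X"
  proof (rule eq_matI)
    fix i j assume "i < dim_row (PT X)" "j < dim_col (PT X)"
    hence ij: "i < n" "j < n" using PTc[OF X] by auto
    show "P $$ (i,j) = PT X $$ (i,j)" using z[OF ij] ij Pc PTc[OF X] by simp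
  qed (use Pc PTc[OF X] in auto)
qed

end


context tang begin

lemma PT_smult: "X \<in> carrier_mat n n \<Longrightarrow> PT (c \<cdot>\<^sub>m X) = c \<cdot>\<^sub>m PT X"
proof -
  assume X: "X \<in> carrier_mat n n"
  have "Rf (c \<cdot>\<^sub>m X) = c \<cdot>\<^sub>m Rf X" unfolding Rf_def
    using mult_smult_distrib[OF IPU X, of c] mult_smult_assoc_mat[OF _ IPV, of "(1\<^sub>m n - PU) * X" n c] IPU X
    by simp
  thus ?thesis unfolding PT_def using X Rc[OF X] by (intro eq_matI) (auto simp: algebra_simps)
qed

lemma PT_R: assumes X: "X \<in> carrier_mat n n" shows "X = PT X + Rf X"
  unfolding PT_def using X Rc[OF X] by (intro eq_matI) auto

lemma frob_PT: assumes X: "X \<in> carrier_mat n n" shows "frob_norm (PT X) \<le> frob_norm X"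
proof -
  have P: "PT X \<in> carrier_mat n n" and R: "Rf X \<in> carrier_mat n n" using PTc Rc X by auto
  have o1: "tr_inner (Rf X) (PT X) = 0" using perp_T[OF R UR[OF X] RV[OF X] PT_in_T[OF X]] .
  have o2: "tr_inner (PT X) (Rf X) = 0" using o1 tr_comm[OF P R] by simp
  have "tr_inner X X = tr_inner (PT X + Rf X) (PT X + Rf X)" using PT_R[OF X] by simp
  also have "\<dots> = tr_inner (PT X) (PT X) + tr_inner (PT X) (Rf X) + (tr_inner (Rf X) (PT X) + tr_inner (Rf X) (Rf X))"
    using P R by (simp add: tr_add_left[of _ n n] tr_add_right[of _ n n])
  finally have "tr_inner X X = tr_inner (PT X) (PT X) + tr_inner (Rf X) (Rf X)" using o1 o2 by simp
  hence "tr_inner (PT X) (PT X) \<le> tr_inner X X" using tr_self_nonneg[of "Rf X"] by simp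
  thus ?thesis unfolding frob_tr by (rule real_sqrt_le_mono)
qed

end

lemma PO_carrier[simp]: "P_Omega \<Omega> X \<in> carrier_mat (dim_row X) (dim_col X)"
  unfolding P_Omega_def by simp

lemma PO_carrier': "X \<in> carrier_mat n m \<Longrightarrow> P_Omega \<Omega> X \<in> carrier_mat n m"
  unfolding P_Omega_def by auto

lemma PO_idx: "i < dim_row X \<Longrightarrow> j < dim_col X \<Longrightarrow>
  P_Omega \<Omega> X $$ (i,j) = (if (i,j) \<in> \<Omega> then X $$ (i,j) else 0)"
  unfolding P_Omega_def by simp

lemma PO_dims[simp]: "dim_row (P_Omega \<Omega> X) = dim_row X" "dim_col (P_Omega \<Omega> X) = dim_col X"
  unfolding P_Omega_def by auto

lemma PO_smult: "P_Omega \<Omega> (c \<cdot>\<^sub>m X) = c \<cdot>\<^sub>m P_Omega \<Omega> X"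
  unfolding P_Omega_def by (rule eq_matI) auto

lemma PO_add: "X \<in> carrier_mat n m \<Longrightarrow> Y \<in> carrier_mat n m \<Longrightarrow>
  P_Omega \<Omega> (X + Y) = P_Omega \<Omega> X + P_Omega \<Omega> Y"
  unfolding P_Omega_def by (rule eq_matI) auto

lemma PO_split: "X \<in> carrier_mat n m \<Longrightarrow> X = P_Omega \<Omega> X + P_Omega (- \<Omega>) X"
  unfolding P_Omega_def by (rule eq_matI) auto

lemma frob_PO: "frob_norm (P_Omega \<Omega> X) \<le> frob_norm X"
  unfolding frob_norm_def P_Omega_def
  by (simp, intro real_sqrt_le_mono sum_mono) auto

lemma l1_nonneg: "l1_norm X \<ge> 0" unfolding l1_norm_def by (intro sum_nonneg) auto

lemma frob_le_l1: "frob_norm X \<le> l1_norm X"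
proof -
  have "(\<Sum>i<dim_row X. \<Sum>j<dim_col X. (X $$ (i,j))^2) = (\<Sum>ij\<in>{..<dim_row X}\<times>{..<dim_col X}. (\<bar>X $$ ij\<bar>)^2)"
    by (simp add: sum.cartesian_product)
  also have "\<dots> \<le> (\<Sum>ij\<in>{..<dim_row X}\<times>{..<dim_col X}. \<bar>X $$ ij\<bar>)^2"
    by (rule sq_sum_le) auto
  also have "(\<Sum>ij\<in>{..<dim_row X}\<times>{..<dim_col X}. \<bar>X $$ ij\<bar>) = l1_norm X"
    unfolding l1_norm_def by (simp add: sum.cartesian_product)
  finally have "sqrt (\<Sum>i<dim_row X. \<Sum>j<dim_col X. (X $$ (i,j))^2) \<le> sqrt ((l1_norm X)^2)"
    by (rule real_sqrt_le_mono)
  thus ?thesis unfolding frob_norm_def using l1_nonneg[of X] by simp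
qed

lemma l1_zero:
  assumes "l1_norm X = 0" "i < dim_row X" "j < dim_col X"
  shows "X $$ (i,j) = 0"
proof -
  have "\<forall>i\<in>{..<dim_row X}. (\<Sum>j<dim_col X. \<bar>X $$ (i,j)\<bar>) = 0"
    using assms(1) unfolding l1_norm_def by (subst (asm) sum_nonneg_eq_0_iff) (auto intro: sum_nonneg)
  hence "(\<Sum>j<dim_col X. \<bar>X $$ (i,j)\<bar>) = 0" using assms(2) by auto
  hence "\<forall>j\<in>{..<dim_col X}. \<bar>X $$ (i,j)\<bar> = 0" by (subst (asm) sum_nonneg_eq_0_iff) auto
  thus ?thesis using assms(3) by auto
qed

lemma op_norm_bound:
  fixes f :: "real mat \<Rightarrow> real mat"
  assumes lin: "\<And>X c. X \<in> carrier_mat n n \<Longrightarrow> f (c \<cdot>\<^sub>m X) = c \<cdot>\<^sub>m f X"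
    and bd: "\<And>X. X \<in> carrier_mat n n \<Longrightarrow> frob_norm (f X) \<le> frob_norm X"
    and X: "X \<in> carrier_mat n n"
  shows "frob_norm (f X) \<le> op_norm n f * frob_norm X"
proof (cases "frob_norm X = 0")
  case True
  have "f X = f (0 \<cdot>\<^sub>m X)" using X frob_zero_iff[OF X] True by simp
  also have "\<dots> = 0 \<cdot>\<^sub>m f X" using lin[OF X] .
  finally have "frob_norm (f X) = 0" using frob_smult[of 0 "f X"] by simp
  thus ?thesis using True by simp
next
  case False
  define t where "t = frob_norm X"
  have t: "t > 0" using False frob_nonneg[of X] unfolding t_def by simp
  define X' where "X' = (1 / t) \<cdot>\<^sub>m X"
  have X'c: "X' \<in> carrier_mat n n" unfolding X'_def using X by simp
  have fX': "frob_norm X' = 1" unfolding X'_def frob_smult t_def[symmetric] using t by simp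
  define S where "S = {frob_norm (f X) | X. X \<in> carrier_mat n n \<and> frob_norm X \<le> 1}"
  have bdd: "bdd_above S" unfolding S_def
    by (rule bdd_aboveI[of _ 1]) (auto intro: order.trans[OF bd])
  have "frob_norm (f X') \<in> S" unfolding S_def using X'c fX' by auto
  hence "frob_norm (f X') \<le> Sup S" using bdd by (rule cSup_upper)
  also have "Sup S = op_norm n f" unfolding S_def op_norm_def ..
  finally have le: "frob_norm (f X') \<le> op_norm n f" .
  have "frob_norm (f X') = (1 / t) * frob_norm (f X)"
    unfolding X'_def lin[OF X] frob_smult using t by simp
  with le t have "frob_norm (f X) \<le> op_norm n f * t" by (simp add: field_simps)
  thus ?thesis unfolding t_def .
qed


lemma sum3: "(\<Sum>i\<in>I. \<Sum>j\<in>J. a i j) - (\<Sum>i\<in>I. \<Sum>j\<in>J. b i j) + (\<Sum>i\<in>I. \<Sum>j\<in>J. c i j)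
  = (\<Sum>i\<in>I. \<Sum>j\<in>J. (a i j - b i j + c i j :: real))"
  by (simp add: sum.distrib sum_subtractf)

lemma support_iff: "i < dim_row S \<Longrightarrow> j < dim_col S \<Longrightarrow> (i,j) \<in> support S \<longleftrightarrow> S $$ (i,j) \<noteq> 0"
  unfolding support_def by auto

lemma l1_sub:
  assumes S0: "S0 \<in> carrier_mat n n" and H: "H \<in> carrier_mat n n"
  shows "l1_norm (S0 - H) \<ge> l1_norm S0 - tr_inner (sgn_mat S0) H + l1_norm (P_Omega (- support S0) H)"
proof -
  have "l1_norm S0 - tr_inner (sgn_mat S0) H + l1_norm (P_Omega (- support S0) H) =
    (\<Sum>i<n. \<Sum>j<n. \<bar>S0 $$ (i,j)\<bar>) - (\<Sum>i<n. \<Sum>j<n. sgn (S0 $$ (i,j)) * H $$ (i,j)) +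
    (\<Sum>i<n. \<Sum>j<n. (if S0 $$ (i,j) = 0 then \<bar>H $$ (i,j)\<bar> else 0))"
    using S0 H unfolding l1_norm_def tr_inner_def sgn_mat_def
    by (auto simp: PO_idx support_iff intro!: sum.cong arg_cong2[where f = "(+)"] arg_cong2[where f = "(-)"])
  also have "\<dots> = (\<Sum>i<n. \<Sum>j<n. \<bar>S0 $$ (i,j)\<bar> - sgn (S0 $$ (i,j)) * H $$ (i,j) +
       (if S0 $$ (i,j) = 0 then \<bar>H $$ (i,j)\<bar> else 0))" by (rule sum3)
  also have "\<dots> \<le> (\<Sum>i<n. \<Sum>j<n. \<bar>S0 $$ (i,j) - H $$ (i,j)\<bar>)"
  proof (intro sum_mono)
    fix i j
    show "\<bar>S0 $$ (i,j)\<bar> - sgn (S0 $$ (i,j)) * H $$ (i,j) + (if S0 $$ (i,j) = 0 then \<bar>H $$ (i,j)\<bar> else 0)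
      \<le> \<bar>S0 $$ (i,j) - H $$ (i,j)\<bar>"
      by (cases "S0 $$ (i,j) > 0"; cases "S0 $$ (i,j) < 0") (auto simp: sgn_if)
  qed
  also have "\<dots> = l1_norm (S0 - H)" unfolding l1_norm_def using S0 H by (auto intro!: sum.cong)
  finally show ?thesis .
qed

lemma max_le:
  assumes "i < dim_row X" "j < dim_col X"
  shows "\<bar>X $$ (i,j)\<bar> \<le> max_norm X"
proof -
  have fin: "finite {\<bar>X $$ (i,j)\<bar> | i j. i < dim_row X \<and> j < dim_col X}"
  proof (rule finite_subset)
    show "{\<bar>X $$ (i,j)\<bar> | i j. i < dim_row X \<and> j < dim_col X} \<subseteq>
      (\<lambda>(i,j). \<bar>X $$ (i,j)\<bar>) ` ({..<dim_row X} \<times> {..<dim_col X})" by auto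
  qed simp
  show ?thesis unfolding max_norm_def using assms fin by (intro Max_ge) auto
qed

lemma tr_F:
  assumes S0: "S0 \<in> carrier_mat n n" and H: "H \<in> carrier_mat n n" and F: "F \<in> carrier_mat n n"
    and F0: "P_Omega (support S0) F = 0\<^sub>m n n" and Fn: "max_norm F \<le> 1/2"
  shows "tr_inner F H \<ge> - (1/2) * l1_norm (P_Omega (- support S0) H)"
proof -
  have Fz: "F $$ (i,j) = 0" if "i < n" "j < n" "S0 $$ (i,j) \<noteq> 0" for i j
  proof -
    have "P_Omega (support S0) F $$ (i,j) = 0" using F0 that by simp
    thus ?thesis using that S0 F by (simp add: PO_idx support_iff)
  qed
  have Fb: "\<bar>F $$ (i,j)\<bar> \<le> 1/2" if "i < n" "j < n" for i j
    using max_le[of i F j] that F Fn by auto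
  have "- (1/2) * l1_norm (P_Omega (- support S0) H) =
    (\<Sum>i<n. \<Sum>j<n. - (1/2) * (if S0 $$ (i,j) = 0 then \<bar>H $$ (i,j)\<bar> else 0))"
    using S0 H unfolding l1_norm_def
    by (auto simp: PO_idx support_iff sum_distrib_left intro!: sum.cong)
  also have "\<dots> \<le> (\<Sum>i<n. \<Sum>j<n. F $$ (i,j) * H $$ (i,j))"
  proof (intro sum_mono)
    fix i j assume "i \<in> {..<n}" "j \<in> {..<n}"
    hence ij: "i < n" "j < n" by auto
    show "- (1/2) * (if S0 $$ (i,j) = 0 then \<bar>H $$ (i,j)\<bar> else 0) \<le> F $$ (i,j) * H $$ (i,j)"
    proof (cases "S0 $$ (i,j) = 0")
      case True
      have "\<bar>F $$ (i,j) * H $$ (i,j)\<bar> \<le> 1/2 * \<bar>H $$ (i,j)\<bar>"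
        unfolding abs_mult by (rule mult_right_mono) (use Fb[OF ij] in auto)
      thus ?thesis using True by auto
    next
      case False thus ?thesis using Fz[OF ij] by simp
    qed
  qed
  also have "\<dots> = tr_inner F H" using F unfolding tr_inner_def by simp
  finally show ?thesis .
qed

lemma tr_PD:
  assumes D: "D \<in> carrier_mat n n" and H: "H \<in> carrier_mat n n"
  shows "tr_inner (P_Omega \<Omega> D) H = tr_inner (P_Omega \<Omega> D) (P_Omega \<Omega> H)"
  using D H unfolding tr_inner_def by (auto simp: PO_idx intro!: sum.cong)

lemma tr_PD_ge:
  assumes D: "D \<in> carrier_mat n n" and H: "H \<in> carrier_mat n n" and Dn: "frob_norm (P_Omega \<Omega> D) \<le> 1/4"
  shows "tr_inner (P_Omega \<Omega> D) H \<ge> - (1/4) * frob_norm (P_Omega \<Omega> H)"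
proof -
  have PD: "P_Omega \<Omega> D \<in> carrier_mat n n" and PH: "P_Omega \<Omega> H \<in> carrier_mat n n"
    using PO_carrier' D H by auto
  have mPH: "(-1) \<cdot>\<^sub>m P_Omega \<Omega> H \<in> carrier_mat n n" using PH by simp
  have "- tr_inner (P_Omega \<Omega> D) (P_Omega \<Omega> H) = tr_inner (P_Omega \<Omega> D) ((-1) \<cdot>\<^sub>m P_Omega \<Omega> H)"
    using tr_smult_right[OF PD PH, of "-1"] by simp
  also have "\<dots> \<le> frob_norm (P_Omega \<Omega> D) * frob_norm ((-1) \<cdot>\<^sub>m P_Omega \<Omega> H)" by (rule tr_CS[OF PD mPH])
  also have "\<dots> = frob_norm (P_Omega \<Omega> D) * frob_norm (P_Omega \<Omega> H)" by (simp add: frob_smult)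
  also have "\<dots> \<le> 1/4 * frob_norm (P_Omega \<Omega> H)" by (rule mult_right_mono[OF Dn frob_nonneg])
  finally show ?thesis using tr_PD[OF D H] by simp
qed


lemma gram_obtain:
  fixes A :: "real mat"
  assumes A: "A \<in> carrier_mat n n"
  obtains Q d where "gram_data n A Q d"
proof -
  obtain Q d where "Q \<in> carrier_mat n n \<and> transpose_mat Q * Q = 1\<^sub>m n \<and> Q * transpose_mat Q = 1\<^sub>m n
    \<and> (\<forall>i<n. d i \<ge> 0) \<and> transpose_mat (A * Q) * (A * Q) = dmat n d
    \<and> transpose_mat A * A = Q * dmat n d * transpose_mat Q
    \<and> singular_values A = mset (map (\<lambda>i. sqrt (d i)) [0..<n])"
    using gram_exists[OF A] by blast
  hence "gram_data n A Q d" using A by unfold_locales auto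
  thus ?thesis by (rule that)
qed

lemma tr_L0_form:
  fixes U V \<Sigma> B :: "real mat"
  assumes U: "U \<in> carrier_mat n r" and V: "V \<in> carrier_mat n r" and \<Sigma>: "\<Sigma> \<in> carrier_mat r r"
    and diag: "diagonal_mat \<Sigma>" and B: "B \<in> carrier_mat n n"
  shows "tr_inner B (U * \<Sigma> * transpose_mat V) = (\<Sum>k<r. \<Sigma> $$ (k,k) * (transpose_mat U * (B * V)) $$ (k,k))"
proof -
  have US: "U * \<Sigma> \<in> carrier_mat n r" using U \<Sigma> by simp
  have VT: "transpose_mat V \<in> carrier_mat r n" using V by simp
  have L: "U * \<Sigma> * transpose_mat V \<in> carrier_mat n n" using US VT by simp
  have BV: "B * V \<in> carrier_mat n r" using B V by simp
  have "tr_inner B (U * \<Sigma> * transpose_mat V) = tr_inner (U * \<Sigma> * transpose_mat V) B"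
    using tr_comm[OF B L] .
  also have "\<dots> = tr_inner (U * \<Sigma>) (B * V)" using tr_adj_right[OF US VT B] by simp
  also have "\<dots> = tr_inner \<Sigma> (transpose_mat U * (B * V))" using tr_adj_left[OF U \<Sigma> BV] .
  also have "\<dots> = (\<Sum>k<r. \<Sum>l<r. if l = k then \<Sigma> $$ (k,k) * (transpose_mat U * (B * V)) $$ (k,k) else 0)"
    unfolding tr_inner_alt[OF \<Sigma>] using diag \<Sigma> unfolding diagonal_mat_def
    by (intro sum.cong refl) auto
  also have "\<dots> = (\<Sum>k<r. \<Sigma> $$ (k,k) * (transpose_mat U * (B * V)) $$ (k,k))"
    by (intro sum.cong refl) (simp add: sum.delta)
  finally show ?thesis .
qed

lemma tr_L0_form':
  fixes U V \<Sigma> B :: "real mat"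
  assumes U: "U \<in> carrier_mat n r" and V: "V \<in> carrier_mat n r" and \<Sigma>: "\<Sigma> \<in> carrier_mat r r"
    and diag: "diagonal_mat \<Sigma>" and B: "B \<in> carrier_mat n n"
  shows "tr_inner B (U * \<Sigma> * transpose_mat V) = (\<Sum>k<r. \<Sigma> $$ (k,k) * (col U k \<bullet> (B *\<^sub>v col V k)))"
  unfolding tr_L0_form[OF assms]
  using U V B by (intro sum.cong refl) (simp add: row_transpose)

lemma nuc_UV:
  fixes U V \<Sigma> L0 :: "real mat"
  assumes U: "U \<in> carrier_mat n r" and V: "V \<in> carrier_mat n r" and \<Sigma>: "\<Sigma> \<in> carrier_mat r r"
    and UU: "transpose_mat U * U = 1\<^sub>m r" and VV: "transpose_mat V * V = 1\<^sub>m r"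
    and diag: "diagonal_mat \<Sigma>" and pos: "\<forall>i<r. \<Sigma> $$ (i,i) > 0"
    and L0: "L0 = U * \<Sigma> * transpose_mat V"
  shows "nuclear_norm L0 = tr_inner (U * transpose_mat V) L0"
proof -
  have VT: "transpose_mat V \<in> carrier_mat r n" using V by simp
  have UVT: "U * transpose_mat V \<in> carrier_mat n n" using U VT by simp
  have L0c: "L0 \<in> carrier_mat n n" unfolding L0 using U \<Sigma> VT by simp
  obtain Q d where "gram_data n L0 Q d" using gram_obtain[OF L0c] .
  then interpret g: gram_data n L0 Q d .
  have uu: "col U k \<bullet> col U k = 1" if "k < r" for k
  proof -
    have "col U k \<bullet> col U k = (transpose_mat U * U) $$ (k,k)" using U that by (simp add: row_transpose)
    thus ?thesis using UU that by simp
  qed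
  have vv: "col V k \<bullet> col V k = 1" if "k < r" for k
  proof -
    have "col V k \<bullet> col V k = (transpose_mat V * V) $$ (k,k)" using V that by (simp add: row_transpose)
    thus ?thesis using VV that by simp
  qed
  have uvv: "transpose_mat U * ((U * transpose_mat V) * V) = 1\<^sub>m r"
    using assoc_mult_mat[OF U VT V] VV UU U by simp
  have trUV: "tr_inner (U * transpose_mat V) L0 = (\<Sum>k<r. \<Sigma> $$ (k,k))"
    unfolding L0 tr_L0_form[OF U V \<Sigma> diag UVT] uvv by (intro sum.cong refl) simp
  have contr1: "\<forall>x\<in>carrier_vec n. ((U * transpose_mat V + 0\<^sub>m n n) *\<^sub>v x) \<bullet> ((U * transpose_mat V + 0\<^sub>m n n) *\<^sub>v x) \<le> 1^2 * (x \<bullet> x)"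
    by (rule contr_UVB[OF U V UU VV]) (use U V in auto)
  have "U * transpose_mat V + 0\<^sub>m n n = U * transpose_mat V" using UVT by simp
  hence lb: "tr_inner (U * transpose_mat V) L0 \<le> 1 * nuclear_norm L0"
    using g.N1[OF UVT, of 1] contr1 by simp
  obtain B where Bc: "B \<in> carrier_mat n n" and trB: "tr_inner B L0 = nuclear_norm L0"
    and symB: "transpose_mat (transpose_mat B * B) = transpose_mat B * B"
    and idemB: "(transpose_mat B * B) * (transpose_mat B * B) = transpose_mat B * B"
    using g.polar_exists by blast
  have contrB: "\<forall>x\<in>carrier_vec n. (B *\<^sub>v x) \<bullet> (B *\<^sub>v x) \<le> 1^2 * (x \<bullet> x)"
    by (rule contr_of_gram[OF Bc refl symB idemB])
  have ub: "nuclear_norm L0 \<le> (\<Sum>k<r. \<Sigma> $$ (k,k))"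
  proof -
  have "nuclear_norm L0 = (\<Sum>k<r. \<Sigma> $$ (k,k) * (col U k \<bullet> (B *\<^sub>v col V k)))"
    using trB unfolding L0 tr_L0_form'[OF U V \<Sigma> diag Bc] by simp
  also have "\<dots> \<le> (\<Sum>k<r. \<Sigma> $$ (k,k))"
  proof (intro sum_mono)
    fix k assume "k \<in> {..<r}" hence k: "k < r" by simp
    have uk: "col U k \<in> carrier_vec n" and vk: "col V k \<in> carrier_vec n" using U V k by auto
    have Bv: "B *\<^sub>v col V k \<in> carrier_vec n" using Bc vk by simp
    have "col U k \<bullet> (B *\<^sub>v col V k) \<le> sqrt (col U k \<bullet> col U k) * sqrt ((B *\<^sub>v col V k) \<bullet> (B *\<^sub>v col V k))"
      by (rule vec_CS[OF uk Bv])
    also have "\<dots> \<le> 1" using uu[OF k] contrB vk vv[OF k] by auto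
    finally have "col U k \<bullet> (B *\<^sub>v col V k) \<le> 1" .
    thus "\<Sigma> $$ (k,k) * (col U k \<bullet> (B *\<^sub>v col V k)) \<le> \<Sigma> $$ (k,k)"
      using pos k by (simp add: mult_left_le)
  qed
  finally show "nuclear_norm L0 \<le> (\<Sum>k<r. \<Sigma> $$ (k,k))" .
  qed
  show ?thesis using trUV lb ub by simp
qed


lemma main_ineq:
  fixes n r :: nat and L0 S0 U V W F D H :: "real mat" and lam :: real
  assumes L0: "L0 \<in> carrier_mat n n" and S0: "S0 \<in> carrier_mat n n"
    and U: "U \<in> carrier_mat n r" and V: "V \<in> carrier_mat n r"
    and UU: "transpose_mat U * U = 1\<^sub>m r" and VV: "transpose_mat V * V = 1\<^sub>m r"
    and nucL0: "nuclear_norm L0 = tr_inner (U * transpose_mat V) L0"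
    and L0T: "L0 \<in> tangent_space n U V"
    and lam: "0 < lam" "lam < 1"
    and PP: "op_norm n (\<lambda>X. P_Omega (support S0) (orth_proj (tangent_space n U V) X)) \<le> 1/2"
    and Wc: "W \<in> carrier_mat n n" and Fc: "F \<in> carrier_mat n n" and Dc: "D \<in> carrier_mat n n"
    and cert: "U * transpose_mat V + W = lam \<cdot>\<^sub>m (sgn_mat S0 + F + P_Omega (support S0) D)"
    and W0: "orth_proj (tangent_space n U V) W = 0\<^sub>m n n"
    and Wn: "spectral_norm W \<le> 1/2"
    and F0: "P_Omega (support S0) F = 0\<^sub>m n n"
    and Fn: "max_norm F \<le> 1/2"
    and Dn: "frob_norm (P_Omega (support S0) D) \<le> 1/4"
    and H: "H \<in> carrier_mat n n"
  shows "nuclear_norm (L0 + H) + lam * l1_norm (S0 - H) \<ge>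
     nuclear_norm L0 + lam * l1_norm S0 + (1 - lam) / 2 * nuclear_norm (tang.Rf n U V H)
     + lam / 4 * l1_norm (P_Omega (- support S0) H)"
proof -
  interpret t: tang n r U V by unfold_locales (use U V UU VV in auto)
  define \<Omega> where "\<Omega> = support S0"
  define A where "A = t.Rf H"
  have Ac: "A \<in> carrier_mat n n" unfolding A_def using t.Rc[OF H] .
  have UA: "transpose_mat U * A = 0\<^sub>m r n" unfolding A_def using t.UR[OF H] .
  have AV: "A * V = 0\<^sub>m n r" unfolding A_def using t.RV[OF H] .
  have PTH: "t.PT H \<in> carrier_mat n n" using t.PTc[OF H] .
  have HPT: "H = t.PT H + A" unfolding A_def using t.PT_R[OF H] .
  have PTHT: "t.PT H \<in> tangent_space n U V" using t.PT_in_T[OF H] .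
  obtain Qa da where "gram_data n A Qa da" using gram_obtain[OF Ac] .
  then interpret ga: gram_data n A Qa da .
  obtain B where Bc: "B \<in> carrier_mat n n" and trBA: "tr_inner B A = nuclear_norm A"
    and symB: "transpose_mat (transpose_mat B * B) = transpose_mat B * B"
    and idemB: "(transpose_mat B * B) * (transpose_mat B * B) = transpose_mat B * B"
    and Bu: "\<forall>k U. U \<in> carrier_mat n k \<longrightarrow> transpose_mat U * A = 0\<^sub>m k n \<longrightarrow> transpose_mat U * B = 0\<^sub>m k n"
    and Bv: "\<forall>k V. V \<in> carrier_mat n k \<longrightarrow> A * V = 0\<^sub>m n k \<longrightarrow> B * V = 0\<^sub>m n k"
    using ga.polar_exists by blast
  have UB: "transpose_mat U * B = 0\<^sub>m r n" using Bu U UA by blast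
  have BV: "B * V = 0\<^sub>m n r" using Bv V AV by blast
  have VT: "transpose_mat V \<in> carrier_mat r n" using V by simp
  have UVT: "U * transpose_mat V \<in> carrier_mat n n" using U VT by simp
  define M where "M = U * transpose_mat V + B"
  have Mc: "M \<in> carrier_mat n n" unfolding M_def using UVT Bc by simp
  have contrM: "\<forall>x\<in>carrier_vec n. (M *\<^sub>v x) \<bullet> (M *\<^sub>v x) \<le> 1^2 * (x \<bullet> x)"
    unfolding M_def by (rule contr_UVB[OF U V UU VV Bc UB BV symB idemB])
  have LH: "L0 + H \<in> carrier_mat n n" using L0 H by simp
  obtain Ql dl where "gram_data n (L0 + H) Ql dl" using gram_obtain[OF LH] .
  then interpret gl: gram_data n "L0 + H" Ql dl .
  have I1: "tr_inner M (L0 + H) \<le> nuclear_norm (L0 + H)" using gl.N1[OF Mc, of 1] contrM by simp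
  have trBL0: "tr_inner B L0 = 0" by (rule t.perp_T[OF Bc UB BV L0T])
  have trBH: "tr_inner B H = nuclear_norm A"
  proof -
    have "tr_inner B H = tr_inner B (t.PT H) + tr_inner B A"
      using HPT tr_add_right[OF Bc PTH Ac] by simp
    thus ?thesis using t.perp_T[OF Bc UB BV PTHT] trBA by simp
  qed
  have "tr_inner M (L0 + H) = tr_inner (U * transpose_mat V) L0 + tr_inner (U * transpose_mat V) H
      + (tr_inner B L0 + tr_inner B H)"
    unfolding M_def using tr_add_left[OF UVT Bc LH] tr_add_right[OF UVT L0 H] tr_add_right[OF Bc L0 H]
    by simp
  hence I: "nuclear_norm (L0 + H) \<ge> nuclear_norm L0 + tr_inner (U * transpose_mat V) H + nuclear_norm A"
    using I1 trBL0 trBH nucL0 by simp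
  have PTW: "t.PT W = 0\<^sub>m n n" using W0 t.orth_proj_PT[OF Wc] by simp
  have WR: "W = t.Rf W" using t.PT_R[OF Wc] PTW t.Rc[OF Wc] by (simp add: left_add_zero_mat)
  have UW: "transpose_mat U * W = 0\<^sub>m r n" using t.UR[OF Wc] WR by simp
  have WV: "W * V = 0\<^sub>m n r" using t.RV[OF Wc] WR by simp
  have trWH: "tr_inner W H = tr_inner W A"
  proof -
    have "tr_inner W H = tr_inner W (t.PT H) + tr_inner W A"
      using HPT tr_add_right[OF Wc PTH Ac] by simp
    thus ?thesis using t.perp_T[OF Wc UW WV PTHT] by simp
  qed
  obtain Qw dw where "gram_data n W Qw dw" using gram_obtain[OF Wc] .
  then interpret gw: gram_data n W Qw dw .
  have contrW: "\<forall>x\<in>carrier_vec n. (W *\<^sub>v x) \<bullet> (W *\<^sub>v x) \<le> (1/2)^2 * (x \<bullet> x)"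
  proof
    fix x :: "real vec" assume x: "x \<in> carrier_vec n"
    have "(spectral_norm W)^2 \<le> (1/2)^2" using Wn gw.spec_nonneg by (intro power_mono) auto
    hence "(spectral_norm W)^2 * (x \<bullet> x) \<le> (1/2)^2 * (x \<bullet> x)"
      by (rule mult_right_mono) (rule self_sprod_nonneg)
    thus "(W *\<^sub>v x) \<bullet> (W *\<^sub>v x) \<le> (1/2)^2 * (x \<bullet> x)" using gw.spec_contr x by (meson order.trans)
  qed
  have IW: "tr_inner W H \<le> 1/2 * nuclear_norm A"
    unfolding trWH by (rule ga.N1[OF Wc _ contrW]) simp
  have sgc: "sgn_mat S0 \<in> carrier_mat n n" using S0 unfolding sgn_mat_def by simp
  have PDc: "P_Omega \<Omega> D \<in> carrier_mat n n" using PO_carrier'[OF Dc] .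
  have Cc: "sgn_mat S0 + F + P_Omega \<Omega> D \<in> carrier_mat n n" using sgc Fc PDc by simp
  have "tr_inner (U * transpose_mat V) H + tr_inner W H = tr_inner (U * transpose_mat V + W) H"
    using tr_add_left[OF UVT Wc H] by simp
  also have "\<dots> = lam * (tr_inner (sgn_mat S0) H + tr_inner F H + tr_inner (P_Omega \<Omega> D) H)"
    unfolding cert \<Omega>_def[symmetric] tr_smult_left[OF Cc]
    using tr_add_left[OF _ PDc H, of "sgn_mat S0 + F"] tr_add_left[OF sgc Fc H] sgc Fc by simp
  finally have cert_eq: "tr_inner (U * transpose_mat V) H =
      lam * tr_inner (sgn_mat S0) H + lam * tr_inner F H + lam * tr_inner (P_Omega \<Omega> D) H - tr_inner W H"
    by (simp add: algebra_simps)
  define b where "b = l1_norm (P_Omega (- \<Omega>) H)"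
  define c where "c = frob_norm (P_Omega \<Omega> H)"
  define a where "a = nuclear_norm A"
  have L1: "l1_norm (S0 - H) \<ge> l1_norm S0 - tr_inner (sgn_mat S0) H + b"
    unfolding b_def \<Omega>_def using l1_sub[OF S0 H] .
  have TF: "tr_inner F H \<ge> - (1/2) * b" unfolding b_def \<Omega>_def by (rule tr_F[OF S0 H Fc F0 Fn])
  have TD: "tr_inner (P_Omega \<Omega> D) H \<ge> - (1/4) * c"
    unfolding c_def \<Omega>_def by (rule tr_PD_ge[OF Dc H Dn])
  have a0: "a \<ge> 0" unfolding a_def by (rule ga.nuc_nonneg)
  have b0: "b \<ge> 0" unfolding b_def by (rule l1_nonneg)
  have c0: "c \<ge> 0" unfolding c_def by (rule frob_nonneg)
  have opb: "frob_norm (P_Omega \<Omega> (t.PT H)) \<le> 1/2 * frob_norm H"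
  proof -
    let ?f = "\<lambda>X. P_Omega (support S0) (orth_proj (tangent_space n U V) X)"
    have "frob_norm (?f H) \<le> op_norm n ?f * frob_norm H"
    proof (rule op_norm_bound)
      fix X :: "real mat" and cc :: real assume X: "X \<in> carrier_mat n n"
      have cX: "cc \<cdot>\<^sub>m X \<in> carrier_mat n n" using X by simp
      show "?f (cc \<cdot>\<^sub>m X) = cc \<cdot>\<^sub>m ?f X"
        unfolding t.orth_proj_PT[OF X] t.orth_proj_PT[OF cX] t.PT_smult[OF X] PO_smult ..
    next
      fix X :: "real mat" assume X: "X \<in> carrier_mat n n"
      show "frob_norm (?f X) \<le> frob_norm X"
        unfolding t.orth_proj_PT[OF X] using frob_PO t.frob_PT[OF X] by (rule order.trans)
    qed (rule H)
    also have "\<dots> \<le> 1/2 * frob_norm H" by (rule mult_right_mono[OF PP frob_nonneg])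
    finally show ?thesis unfolding t.orth_proj_PT[OF H] \<Omega>_def .
  qed
  have cb: "c \<le> 1/2 * frob_norm H + a"
  proof -
    have "P_Omega \<Omega> H = P_Omega \<Omega> (t.PT H) + P_Omega \<Omega> A"
      using HPT PO_add[OF PTH Ac] by simp
    hence "c \<le> frob_norm (P_Omega \<Omega> (t.PT H)) + frob_norm (P_Omega \<Omega> A)"
      unfolding c_def using frob_triangle[OF PO_carrier'[OF PTH] PO_carrier'[OF Ac]] by simp
    also have "frob_norm (P_Omega \<Omega> A) \<le> a" unfolding a_def
      using frob_PO ga.frob_le_nuc by (rule order.trans)
    finally show ?thesis using opb by simp
  qed
  have Hb: "frob_norm H \<le> c + b"
  proof -
    have "frob_norm H \<le> frob_norm (P_Omega \<Omega> H) + frob_norm (P_Omega (- \<Omega>) H)"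
    proof -
      have "frob_norm H = frob_norm (P_Omega \<Omega> H + P_Omega (- \<Omega>) H)"
        using PO_split[OF H, of \<Omega>] by (rule arg_cong)
      thus ?thesis using frob_triangle[OF PO_carrier'[OF H, of \<Omega>] PO_carrier'[OF H, of "- \<Omega>"]] by simp
    qed
    also have "frob_norm (P_Omega (- \<Omega>) H) \<le> b" unfolding b_def by (rule frob_le_l1)
    finally show ?thesis unfolding c_def by simp
  qed
  have cab: "c \<le> b + 2 * a" using cb Hb by simp
  have p1: "lam * tr_inner F H \<ge> lam * (- (1/2) * b)" using TF lam by (intro mult_left_mono) auto
  have p2: "lam * tr_inner (P_Omega \<Omega> D) H \<ge> lam * (- (1/4) * c)" using TD lam by (intro mult_left_mono) auto
  have p3: "lam * l1_norm (S0 - H) \<ge> lam * (l1_norm S0 - tr_inner (sgn_mat S0) H + b)"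
    using L1 lam by (intro mult_left_mono) auto
  have p4: "lam * c \<le> lam * (b + 2 * a)" using cab lam by (intro mult_left_mono) auto
  have goal: "nuclear_norm (L0 + H) + lam * l1_norm (S0 - H) \<ge>
     nuclear_norm L0 + lam * l1_norm S0 + (1 - lam) / 2 * a + lam / 4 * b"
  proof -
    have p1': "lam * tr_inner F H \<ge> - (lam * b) / 2" using p1 by simp
    have p2': "lam * tr_inner (P_Omega \<Omega> D) H \<ge> - (lam * c) / 4" using p2 by simp
    have p3': "lam * l1_norm (S0 - H) \<ge> lam * l1_norm S0 - lam * tr_inner (sgn_mat S0) H + lam * b"
      using p3 by (simp add: algebra_simps)
    have p4': "lam * c \<le> lam * b + 2 * (lam * a)" using p4 by (simp add: algebra_simps)
    have e: "(1 - lam) / 2 * a + lam / 4 * b = a / 2 - (lam * a) / 2 + (lam * b) / 4"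
      by (simp add: field_simps)
    show ?thesis using e I cert_eq IW p1' p2' p3' p4' unfolding a_def[symmetric] by linarith
  qed
  thus ?thesis unfolding a_def b_def A_def \<Omega>_def .
qed


lemma opb_lemma:
  fixes n r :: nat and U V S0 H :: "real mat"
  assumes U: "U \<in> carrier_mat n r" and V: "V \<in> carrier_mat n r"
    and UU: "transpose_mat U * U = 1\<^sub>m r" and VV: "transpose_mat V * V = 1\<^sub>m r"
    and PP: "op_norm n (\<lambda>X. P_Omega (support S0) (orth_proj (tangent_space n U V) X)) \<le> 1/2"
    and H: "H \<in> carrier_mat n n"
  shows "frob_norm (P_Omega (support S0) (tang.PT n U V H)) \<le> 1/2 * frob_norm H"
proof -
  interpret t: tang n r U V by unfold_locales (use U V UU VV in auto)
  let ?f = "\<lambda>X. P_Omega (support S0) (orth_proj (tangent_space n U V) X)"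
  have "frob_norm (?f H) \<le> op_norm n ?f * frob_norm H"
  proof (rule op_norm_bound)
    fix X :: "real mat" and cc :: real assume X: "X \<in> carrier_mat n n"
    have cX: "cc \<cdot>\<^sub>m X \<in> carrier_mat n n" using X by simp
    show "?f (cc \<cdot>\<^sub>m X) = cc \<cdot>\<^sub>m ?f X"
      unfolding t.orth_proj_PT[OF X] t.orth_proj_PT[OF cX] t.PT_smult[OF X] PO_smult ..
  next
    fix X :: "real mat" assume X: "X \<in> carrier_mat n n"
    show "frob_norm (?f X) \<le> frob_norm X"
      unfolding t.orth_proj_PT[OF X] using frob_PO t.frob_PT[OF X] by (rule order.trans)
  qed (rule H)
  also have "\<dots> \<le> 1/2 * frob_norm H" by (rule mult_right_mono[OF PP frob_nonneg])
  finally show ?thesis unfolding t.orth_proj_PT[OF H] .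
qed

theorem lemma2p4:
  fixes n r :: nat and L0 S0 U V \<Sigma> W F D :: "real mat" and lam :: real
  assumes L0: "L0 \<in> carrier_mat n n" and S0: "S0 \<in> carrier_mat n n"
    and U: "U \<in> carrier_mat n r" and V: "V \<in> carrier_mat n r"
    and \<Sigma>: "\<Sigma> \<in> carrier_mat r r"
    and UU: "transpose_mat U * U = 1\<^sub>m r" and VV: "transpose_mat V * V = 1\<^sub>m r"
    and \<Sigma>diag: "diagonal_mat \<Sigma>" and \<Sigma>pos: "\<forall>i<r. \<Sigma> $$ (i,i) > 0"
    and svd: "L0 = U * \<Sigma> * transpose_mat V"
    and lam: "0 < lam" "lam < 1"
    and PP: "op_norm n (\<lambda>X. P_Omega (support S0) (orth_proj (tangent_space n U V) X)) \<le> 1/2"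
    and WFD: "W \<in> carrier_mat n n" "F \<in> carrier_mat n n" "D \<in> carrier_mat n n"
    and cert: "U * transpose_mat V + W =
        lam \<cdot>\<^sub>m (sgn_mat S0 + F + P_Omega (support S0) D)"
    and W0: "orth_proj (tangent_space n U V) W = 0\<^sub>m n n"
    and Wn: "spectral_norm W \<le> 1/2"
    and F0: "P_Omega (support S0) F = 0\<^sub>m n n"
    and Fn: "max_norm F \<le> 1/2"
    and Dn: "frob_norm (P_Omega (support S0) D) \<le> 1/4"
  shows "\<forall>L S. is_opt n lam (L0 + S0) L S \<longleftrightarrow> (L = L0 \<and> S = S0)"
proof -
  interpret t: tang n r U V by unfold_locales (use U V UU VV in auto)
  have nucL0: "nuclear_norm L0 = tr_inner (U * transpose_mat V) L0"
    by (rule nuc_UV[OF U V \<Sigma> UU VV \<Sigma>diag \<Sigma>pos svd])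
  have L0T: "L0 \<in> tangent_space n U V"
  proof -
    have ST: "transpose_mat \<Sigma> \<in> carrier_mat r r" using \<Sigma> by simp
    have VT: "transpose_mat V \<in> carrier_mat r n" using V by simp
    have Xa: "V * transpose_mat \<Sigma> \<in> carrier_mat n (dim_col U)" using V ST U by simp
    have Yb: "0\<^sub>m n r \<in> carrier_mat n (dim_col V)" using V by simp
    have "U * transpose_mat (V * transpose_mat \<Sigma>) = U * (\<Sigma> * transpose_mat V)"
      using transpose_mult[OF V ST] by simp
    also have "\<dots> = L0" unfolding svd using assoc_mult_mat[OF U \<Sigma> VT] by simp
    finally have "L0 = U * transpose_mat (V * transpose_mat \<Sigma>) + 0\<^sub>m n r * transpose_mat V"
      using VT L0 by simp
    thus ?thesis unfolding tangent_space_def using Xa Yb by blast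
  qed
  have MI: "nuclear_norm (L0 + H) + lam * l1_norm (S0 - H) \<ge>
     nuclear_norm L0 + lam * l1_norm S0 + (1 - lam) / 2 * nuclear_norm (t.Rf H)
     + lam / 4 * l1_norm (P_Omega (- support S0) H)" if H: "H \<in> carrier_mat n n" for H
    by (rule main_ineq[OF L0 S0 U V UU VV nucL0 L0T lam PP WFD cert W0 Wn F0 Fn Dn H])
  have nucR: "nuclear_norm (t.Rf H) \<ge> 0" if H: "H \<in> carrier_mat n n" for H
  proof -
    obtain Q d where "gram_data n (t.Rf H) Q d" using gram_obtain[OF t.Rc[OF H]] .
    then interpret g: gram_data n "t.Rf H" Q d .
    show ?thesis by (rule g.nuc_nonneg)
  qed
  have decomp: "L' = L0 + (L' - L0)" "S' = S0 - (L' - L0)"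
    if "L' \<in> carrier_mat n n" "S' \<in> carrier_mat n n" "L' + S' = L0 + S0" for L' S'
  proof -
    show "L' = L0 + (L' - L0)" using that L0 by (intro eq_matI) auto
    have e: "L' $$ (i,j) + S' $$ (i,j) = L0 $$ (i,j) + S0 $$ (i,j)" if ij: "i < n" "j < n" for i j
    proof -
      have "(L' + S') $$ (i,j) = (L0 + S0) $$ (i,j)" using \<open>L' + S' = L0 + S0\<close> by simp
      thus ?thesis using ij \<open>L' \<in> carrier_mat n n\<close> \<open>S' \<in> carrier_mat n n\<close> L0 S0 by simp
    qed
    show "S' = S0 - (L' - L0)"
    proof (rule eq_matI)
      fix i j assume "i < dim_row (S0 - (L' - L0))" "j < dim_col (S0 - (L' - L0))"
      hence ij: "i < n" "j < n" using L0 by auto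
      show "S' $$ (i,j) = (S0 - (L' - L0)) $$ (i,j)" using e[OF ij] ij L0 S0 \<open>L' \<in> carrier_mat n n\<close> by simp
    qed (use that L0 S0 in auto)
  qed
  have opt0: "is_opt n lam (L0 + S0) L0 S0"
    unfolding is_opt_def
  proof (intro conjI allI impI)
    fix L' S' assume "L' \<in> carrier_mat n n \<and> S' \<in> carrier_mat n n \<and> L' + S' = L0 + S0"
    hence L': "L' \<in> carrier_mat n n" and S': "S' \<in> carrier_mat n n" and sum: "L' + S' = L0 + S0" by auto
    define H where "H = L' - L0"
    have Hc: "H \<in> carrier_mat n n" unfolding H_def using L0 by (rule minus_carrier_mat)
    have eL: "L' = L0 + H" and eS: "S' = S0 - H" unfolding H_def using decomp[OF L' S' sum] by auto
    have "(1 - lam) / 2 * nuclear_norm (t.Rf H) \<ge> 0" using lam nucR[OF Hc] by simp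
    moreover have "lam / 4 * l1_norm (P_Omega (- support S0) H) \<ge> 0" using lam l1_nonneg by simp
    ultimately show "nuclear_norm L0 + lam * l1_norm S0 \<le> nuclear_norm L' + lam * l1_norm S'"
      unfolding eL eS using MI[OF Hc] by linarith
  qed (use L0 S0 in auto)
  show ?thesis
  proof (intro allI iffI)
    fix L S assume "L = L0 \<and> S = S0"
    thus "is_opt n lam (L0 + S0) L S" using opt0 by simp
  next
    fix L S assume opt: "is_opt n lam (L0 + S0) L S"
    hence Lc: "L \<in> carrier_mat n n" and Sc: "S \<in> carrier_mat n n" and sum: "L + S = L0 + S0"
      and le: "nuclear_norm L + lam * l1_norm S \<le> nuclear_norm L0 + lam * l1_norm S0"
      unfolding is_opt_def using L0 S0 by auto
    define H where "H = L - L0"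
    have Hc: "H \<in> carrier_mat n n" unfolding H_def using L0 by (rule minus_carrier_mat)
    have eL: "L = L0 + H" and eS: "S = S0 - H" unfolding H_def using decomp[OF Lc Sc sum] by auto
    define a where "a = nuclear_norm (t.Rf H)"
    define b where "b = l1_norm (P_Omega (- support S0) H)"
    have a0: "a \<ge> 0" unfolding a_def using nucR[OF Hc] .
    have b0: "b \<ge> 0" unfolding b_def by (rule l1_nonneg)
    have "(1 - lam) / 2 * a + lam / 4 * b \<le> 0"
      using MI[OF Hc] le unfolding eL[symmetric] eS[symmetric] a_def b_def by linarith
    moreover have "(1 - lam) / 2 * a \<ge> 0" "lam / 4 * b \<ge> 0" using a0 b0 lam by auto
    ultimately have "(1 - lam) / 2 * a = 0" "lam / 4 * b = 0" by linarith+
    hence az: "a = 0" and bz: "b = 0" using lam by auto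
    have RHc: "t.Rf H \<in> carrier_mat n n" using t.Rc[OF Hc] .
    obtain Q d where "gram_data n (t.Rf H) Q d" using gram_obtain[OF RHc] .
    then interpret g: gram_data n "t.Rf H" Q d .
    have "frob_norm (t.Rf H) = 0" using g.frob_le_nuc az frob_nonneg[of "t.Rf H"] unfolding a_def by linarith
    hence R0: "t.Rf H = 0\<^sub>m n n" using frob_zero_iff[OF RHc] by simp
    have HPT: "H = t.PT H" using t.PT_R[OF Hc] unfolding R0 using t.PTc[OF Hc] by simp
    have PO0: "P_Omega (- support S0) H = 0\<^sub>m n n"
    proof (rule eq_matI)
      fix i j assume "i < dim_row (0\<^sub>m n n)" "j < dim_col (0\<^sub>m n n)"
      hence ij: "i < n" "j < n" by auto
      show "P_Omega (- support S0) H $$ (i,j) = 0\<^sub>m n n $$ (i,j)"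
        using l1_zero[OF bz[unfolded b_def]] ij Hc by simp
    qed (use Hc in auto)
    have HPO: "H = P_Omega (support S0) H" using PO_split[OF Hc, of "support S0"] unfolding PO0
      using PO_carrier'[OF Hc, of "support S0"] by simp
    have "frob_norm H = frob_norm (P_Omega (support S0) (t.PT H))"
      using HPO HPT by simp
    also have "\<dots> \<le> 1/2 * frob_norm H" by (rule opb_lemma[OF U V UU VV PP Hc])
    finally have "frob_norm H = 0" using frob_nonneg[of H] by linarith
    hence "H = 0\<^sub>m n n" using frob_zero_iff[OF Hc] by simp
    thus "L = L0 \<and> S = S0" unfolding eL eS using L0 S0 by auto
  qed
qed


end
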